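(* Let $u$ be a quasi-definite linear functional on $\mathbb C[\boldsymbol x]$, let $\boldsymbol x_1,\dots,\boldsymbol x_q\in\mathbb R^D$ be distinct, $\xi_1,\dots,\xi_q\in\mathbb C$, and $\hat u=u+\sum_{i=1}^q\xi_i\delta(\boldsymbol x-\boldsymbol x_i)$ (i.e. $\langle\hat u,P\rangle=\langle u,P\rangle+\sum_i\xi_iP(\boldsymbol x_i)$), assumed quasi-definite. Let $M$ be the $q\times q$ matrix with entries $M_{ij}=\delta_{ij}+\xi_iK_{n-1}(\boldsymbol x_i,\boldsymbol x_j)$. Then for $n\ge1$ $$\hat P_{[n]}(\boldsymbol x)=\Theta_*\begin{pmatrix}M&\begin{matrix}\xi_1K_{n-1}(\boldsymbol x_1,\boldsymbol x)\\ \vdots\\ \xi_qK_{n-1}(\boldsymbol x_q,\boldsymbol x)\end{matrix}\\ \begin{matrix}P_{[n]}(\boldsymbol x_1)&\cdots&P_{[n]}(\boldsymbol x_q)\end{matrix}&P_{[n]}(\boldsymbol x)\end{pmatrix},\qquad \hat H_{[n]}=\Theta_*\begin{pmatrix}M&\begin{matrix}-\xi_1P_{[n]}(\boldsymbol x_1)^\top\\ \vdots\\ -\xi_qP_{[n]}(\boldsymbol x_q)^\top\end{matrix}\\ \begin{matrix}P_{[n]}(\boldsymbol x_1)&\cdots&P_{[n]}(\boldsymbol x_q)\end{matrix}&H_{[n]}\end{pmatrix}.$$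
   Context: Multi-indices ordered by graded lexicographic order; $\chi(\boldsymbol x)$ the semi-infinite vector of monomials with blocks $\chi_{[k]}$. For a linear functional $u$ on $\mathbb C[\boldsymbol x]$, moment matrix $G=\langle u,\chi\chi^\top\rangle$; quasi-definite: all block truncations nonsingular; then $G=S^{-1}HS^{-\top}$, $S$ block lower unitriangular, $H$ block diagonal with blocks $H_{[k]}$; $P=S\chi$ with blocks $P_{[k]}$ (column vectors of polynomials) are the monic orthogonal polynomials; hats refer to $\hat u$. $K_{n-1}(\boldsymbol x,\boldsymbol y)=\sum_{m=0}^{n-1}P_{[m]}(\boldsymbol x)^\top H_{[m]}^{-1}P_{[m]}(\boldsymbol y)$. Last quasi-determinant: $\Theta_*\begin{pmatrix}A&B\\C&D\end{pmatrix}=D-CA^{-1}B$. *)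

theory Defs
  imports Complex_Main "Jordan_Normal_Form.Determinant"
begin

text \<open>Multi-indices in D variables are lists of naturals of length D.
  The block of degree k, listed in graded lexicographic order (x1^k, x1^(k-1) x2, ..., xD^k).\<close>
fun mons :: "nat \<Rightarrow> nat \<Rightarrow> nat list list" where
  "mons 0 k = (if k = 0 then [[]] else [])"
| "mons (Suc d) k = concat (map (\<lambda>a. map (Cons a) (mons d (k - a))) (rev [0..<Suc k]))"

definition mi :: "nat \<Rightarrow> nat list \<Rightarrow> bool" where
  "mi D \<alpha> \<longleftrightarrow> length \<alpha> = D"

definition lowset :: "nat \<Rightarrow> nat \<Rightarrow> nat list set" where
  "lowset D k = {\<gamma>. length \<gamma> = D \<and> sum_list \<gamma> \<le> k}"

text \<open>A linear functional u on C[x] is given by its moments m alpha = <u, x^alpha>.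
  Moment matrix entries G_(alpha,beta) = <u, x^alpha x^beta>.\<close>
definition gm :: "(nat list \<Rightarrow> complex) \<Rightarrow> nat list \<Rightarrow> nat list \<Rightarrow> complex" where
  "gm m \<alpha> \<beta> = m (map2 (+) \<alpha> \<beta>)"

definition monval :: "complex list \<Rightarrow> nat list \<Rightarrow> complex" where
  "monval x \<alpha> = prod_list (map2 (^) x \<alpha>)"

definition idx :: "nat \<Rightarrow> nat \<Rightarrow> nat list list" where
  "idx D N = concat (map (mons D) [0..<N])"

definition trunc :: "nat \<Rightarrow> (nat list \<Rightarrow> complex) \<Rightarrow> nat \<Rightarrow> complex mat" where
  "trunc D m N = (let I = idx D N in mat (length I) (length I) (\<lambda>(i,j). gm m (I!i) (I!j)))"

definition quasi_definite :: "nat \<Rightarrow> (nat list \<Rightarrow> complex) \<Rightarrow> bool" where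
  "quasi_definite D m \<longleftrightarrow> (\<forall>N\<ge>1. det (trunc D m N) \<noteq> 0)"

definition block_unitri :: "nat \<Rightarrow> (nat list \<Rightarrow> nat list \<Rightarrow> complex) \<Rightarrow> bool" where
  "block_unitri D S \<longleftrightarrow> (\<forall>\<alpha> \<beta>.
      (\<not> (mi D \<alpha> \<and> mi D \<beta>) \<longrightarrow> S \<alpha> \<beta> = 0) \<and>
      (mi D \<alpha> \<and> mi D \<beta> \<and> sum_list \<alpha> < sum_list \<beta> \<longrightarrow> S \<alpha> \<beta> = 0) \<and>
      (mi D \<alpha> \<and> mi D \<beta> \<and> sum_list \<alpha> = sum_list \<beta> \<longrightarrow> S \<alpha> \<beta> = (if \<alpha> = \<beta> then 1 else 0)))"

text \<open>Entries of S G S^T (sums are exact since S is block lower triangular).\<close>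
definition sgs :: "nat \<Rightarrow> (nat list \<Rightarrow> complex) \<Rightarrow> (nat list \<Rightarrow> nat list \<Rightarrow> complex)
    \<Rightarrow> nat list \<Rightarrow> nat list \<Rightarrow> complex" where
  "sgs D m S \<alpha> \<beta> = (\<Sum>\<gamma>\<in>lowset D (sum_list \<alpha>). \<Sum>\<delta>\<in>lowset D (sum_list \<beta>).
       S \<alpha> \<gamma> * gm m \<gamma> \<delta> * S \<beta> \<delta>)"

text \<open>G = S^-1 H S^-T with H block diagonal, i.e. S G S^T = H block diagonal.\<close>
definition ldl :: "nat \<Rightarrow> (nat list \<Rightarrow> complex) \<Rightarrow> (nat list \<Rightarrow> nat list \<Rightarrow> complex) \<Rightarrow> bool" where
  "ldl D m S \<longleftrightarrow> block_unitri D S \<and>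
     (\<forall>\<alpha> \<beta>. mi D \<alpha> \<and> mi D \<beta> \<and> sum_list \<alpha> \<noteq> sum_list \<beta> \<longrightarrow> sgs D m S \<alpha> \<beta> = 0)"

definition Sfac :: "nat \<Rightarrow> (nat list \<Rightarrow> complex) \<Rightarrow> nat list \<Rightarrow> nat list \<Rightarrow> complex" where
  "Sfac D m = (THE S. ldl D m S)"

definition Hblk :: "nat \<Rightarrow> (nat list \<Rightarrow> complex) \<Rightarrow> nat \<Rightarrow> complex mat" where
  "Hblk D m k = (let I = mons D k in
     mat (length I) (length I) (\<lambda>(i,j). sgs D m (Sfac D m) (I!i) (I!j)))"

definition Pvec :: "nat \<Rightarrow> (nat list \<Rightarrow> complex) \<Rightarrow> nat \<Rightarrow> complex list \<Rightarrow> complex mat" where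
  "Pvec D m k x = (let I = mons D k in
     mat (length I) 1 (\<lambda>(i,j). \<Sum>\<gamma>\<in>lowset D k. Sfac D m (I!i) \<gamma> * monval x \<gamma>))"

definition minv :: "complex mat \<Rightarrow> complex mat" where
  "minv A = (THE B. B \<in> carrier_mat (dim_row A) (dim_row A) \<and>
              A * B = 1\<^sub>m (dim_row A) \<and> B * A = 1\<^sub>m (dim_row A))"

text \<open>kernel D m n x y = K_(n-1)(x,y) = sum over k < n of P_[k](x)^T H_[k]^-1 P_[k](y).\<close>
definition kernel :: "nat \<Rightarrow> (nat list \<Rightarrow> complex) \<Rightarrow> nat \<Rightarrow> complex list \<Rightarrow> complex list \<Rightarrow> complex" where
  "kernel D m n x y = (\<Sum>k<n. (transpose_mat (Pvec D m k x) * minv (Hblk D m k) * Pvec D m k y) $$ (0,0))"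

text \<open>Last quasi-determinant of the block matrix (A B; C Dm).\<close>
definition qdet :: "complex mat \<Rightarrow> complex mat \<Rightarrow> complex mat \<Rightarrow> complex mat \<Rightarrow> complex mat" where
  "qdet A B C Dm = Dm - C * minv A * B"

definition dirac_pert :: "(nat list \<Rightarrow> complex) \<Rightarrow> nat \<Rightarrow> (nat \<Rightarrow> complex) \<Rightarrow> (nat \<Rightarrow> real list)
    \<Rightarrow> nat list \<Rightarrow> complex" where
  "dirac_pert m q \<xi> pts \<alpha> = m \<alpha> + (\<Sum>i<q. \<xi> i * monval (map of_real (pts i)) \<alpha>)"

end

theory Submission
  imports Defs
begin


lemma set_mons: "set (mons d k) = {\<gamma>. length \<gamma> = d \<and> sum_list \<gamma> = k}"
proof (induction d arbitrary: k)
  case 0 then show ?case by auto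
next
  case (Suc d)
  have 1: "g \<in> {\<gamma>. length \<gamma> = Suc d \<and> sum_list \<gamma> = k}" if "g \<in> set (mons (Suc d) k)" for g
    using that Suc by auto
  have 2: "g \<in> set (mons (Suc d) k)" if g: "g \<in> {\<gamma>. length \<gamma> = Suc d \<and> sum_list \<gamma> = k}" for g
  proof -
    obtain a t where gt: "g = a # t" using g by (cases g) auto
    with g have "a \<le> k" "length t = d" "sum_list t = k - a" by auto
    then show "g \<in> set (mons (Suc d) k)" using Suc gt by (auto intro!: bexI[of _ a])
  qed
  show ?case using 1 2 by blast
qed

lemma distinct_concat_map: "distinct xs \<Longrightarrow> (\<forall>x\<in>set xs. distinct (f x)) \<Longrightarrow>
  (\<forall>x\<in>set xs. \<forall>y\<in>set xs. x \<noteq> y \<longrightarrow> set (f x) \<inter> set (f y) = {}) \<Longrightarrow> distinct (concat (map f xs))"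
  by (induction xs) auto

lemma distinct_mons: "distinct (mons d k)"
proof (induction d arbitrary: k)
  case 0 then show ?case by auto
next
  case (Suc d)
  show ?case unfolding mons.simps
    by (rule distinct_concat_map) (auto simp: Suc distinct_map)
qed

lemma finite_lowset: "finite (lowset D k)"
proof -
  have "lowset D k \<subseteq> {xs. set xs \<subseteq> {0..k} \<and> length xs = D}"
    unfolding lowset_def using member_le_sum_list by fastforce
  moreover have "finite {xs. set xs \<subseteq> {0..k} \<and> length xs = D}"
    by (rule finite_lists_length_eq) auto
  ultimately show ?thesis by (rule finite_subset)
qed

lemma set_idx: "set (idx D N) = {\<gamma>. length \<gamma> = D \<and> sum_list \<gamma> < N}"
  unfolding idx_def by (auto simp: set_mons)

lemma distinct_idx: "distinct (idx D N)"
  unfolding idx_def by (rule distinct_concat_map) (auto simp: distinct_mons set_mons)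




lemma sum_nth_distinct: "distinct xs \<Longrightarrow> (\<Sum>j<length xs. f (xs ! j)) = (\<Sum>\<delta>\<in>set xs. f \<delta>)"
  by (metis sum.reindex_bij_betw bij_betw_nth)

lemma map2_plus_comm: "map2 (+) a b = map2 (+) b (a :: nat list)"
proof (induction a arbitrary: b)
  case Nil then show ?case by simp
next
  case (Cons x a) then show ?case by (cases b) auto
qed

lemma gm_sym: "gm m a b = gm m b a"
  unfolding gm_def using map2_plus_comm by metis

definition lt :: "nat \<Rightarrow> nat \<Rightarrow> nat list set" where
  "lt D N = {\<gamma>. length \<gamma> = D \<and> sum_list \<gamma> < N}"

lemma finite_lt: "finite (lt D N)"
  by (rule finite_subset[OF _ finite_lowset[of D N]]) (auto simp: lt_def lowset_def)

lemma trunc_carrier: "trunc D m N \<in> carrier_mat (length (idx D N)) (length (idx D N))"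
  unfolding trunc_def Let_def by auto

lemma trunc_idx: "i < length (idx D N) \<Longrightarrow> j < length (idx D N) \<Longrightarrow>
   trunc D m N $$ (i,j) = gm m (idx D N ! i) (idx D N ! j)"
  unfolding trunc_def Let_def by auto

lemma ND:
  assumes qd: "quasi_definite D m" and N: "N \<ge> 1"
    and supp: "\<forall>\<delta>. \<delta> \<notin> lt D N \<longrightarrow> d \<delta> = 0"
    and orth: "\<forall>\<gamma>\<in>lt D N. (\<Sum>\<delta>\<in>lt D N. d \<delta> * gm m \<delta> \<gamma>) = 0"
  shows "d = (\<lambda>_. 0)"
proof -
  let ?I = "idx D N" let ?A = "trunc D m N"
  define v where "v = vec (length ?I) (\<lambda>j. d (?I ! j))"
  have sI: "set ?I = lt D N" by (simp add: set_idx lt_def)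
  have dI: "distinct ?I" by (rule distinct_idx)
  have "?A *\<^sub>v v = 0\<^sub>v (length ?I)"
  proof (rule eq_vecI)
    fix i assume i: "i < dim_vec (0\<^sub>v (length ?I))"
    hence i': "i < length ?I" by simp
    have "(?A *\<^sub>v v) $ i = (\<Sum>j<length ?I. gm m (?I ! i) (?I ! j) * d (?I ! j))"
      using i' trunc_carrier[of D m N] by (auto simp: scalar_prod_def v_def trunc_idx lessThan_atLeast0 intro!: sum.cong)
    also have "\<dots> = (\<Sum>\<delta>\<in>lt D N. d \<delta> * gm m \<delta> (?I ! i))"
      using sum_nth_distinct[OF dI, of "\<lambda>\<delta>. gm m (?I ! i) \<delta> * d \<delta>"] sI
      by (simp add: gm_sym mult.commute)
    also have "\<dots> = 0" using orth i' sI nth_mem by blast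
    finally show "(?A *\<^sub>v v) $ i = 0\<^sub>v (length ?I) $ i" using i by simp
  qed (use trunc_carrier[of D m N] in auto)
  moreover have "det ?A \<noteq> 0" using qd N unfolding quasi_definite_def by auto
  ultimately have "v = 0\<^sub>v (length ?I)"
    using det_0_iff_vec_prod_zero[OF trunc_carrier[of D m N]] unfolding v_def by (meson vec_carrier)
  hence "\<forall>j<length ?I. d (?I ! j) = 0" unfolding v_def
    by (metis index_vec index_zero_vec(1))
  hence "\<forall>\<delta>\<in>lt D N. d \<delta> = 0" using sI by (metis in_set_conv_nth)
  then show ?thesis using supp by auto
qed

lemma minv_props:
  assumes A: "A \<in> carrier_mat k k" and d: "det A \<noteq> 0"
  shows "minv A \<in> carrier_mat k k \<and> A * minv A = 1\<^sub>m k \<and> minv A * A = 1\<^sub>m k"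
proof -
  have "A \<in> Units (ring_mat TYPE(complex) k undefined)" by (rule det_non_zero_imp_unit[OF A d])
  then obtain B where B: "B \<in> carrier_mat k k" "B * A = 1\<^sub>m k" "A * B = 1\<^sub>m k"
    unfolding Units_def ring_mat_def by auto
  have dr: "dim_row A = k" using A by auto
  have "minv A = B" unfolding minv_def dr
  proof (rule the_equality)
    show "B \<in> carrier_mat k k \<and> A * B = 1\<^sub>m k \<and> B * A = 1\<^sub>m k" using B by auto
  next
    fix C assume C: "C \<in> carrier_mat k k \<and> A * C = 1\<^sub>m k \<and> C * A = 1\<^sub>m k"
    have "C = (B * A) * C" using B C by auto
    also have "\<dots> = B * (A * C)" using B C A by (metis assoc_mult_mat)
    also have "\<dots> = B" using B C by auto
    finally show "C = B" .
  qed
  then show ?thesis using B by auto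
qed

lemma det_nz_kernel:
  assumes A: "(A :: complex mat) \<in> carrier_mat k k" and ker: "\<And>v. v \<in> carrier_vec k \<Longrightarrow> A *\<^sub>v v = 0\<^sub>v k \<Longrightarrow> v = 0\<^sub>v k"
  shows "det A \<noteq> 0"
  using det_0_iff_vec_prod_zero[OF A] ker by auto

lemma SOL:
  assumes qd: "quasi_definite D m" and N: "N \<ge> 1"
  shows "\<exists>w. (\<forall>\<delta>. \<delta> \<notin> lt D N \<longrightarrow> w \<delta> = 0) \<and> (\<forall>\<gamma>\<in>lt D N. (\<Sum>\<delta>\<in>lt D N. w \<delta> * gm m \<delta> \<gamma>) = b \<gamma>)"
proof -
  let ?I = "idx D N" let ?A = "trunc D m N" let ?n = "length ?I"
  have sI: "set ?I = lt D N" by (simp add: set_idx lt_def)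
  have dI: "distinct ?I" by (rule distinct_idx)
  have "det ?A \<noteq> 0" using qd N unfolding quasi_definite_def by auto
  from minv_props[OF trunc_carrier this] have B: "minv ?A \<in> carrier_mat ?n ?n" "?A * minv ?A = 1\<^sub>m ?n" by auto
  define bv where "bv = vec ?n (\<lambda>i. b (?I ! i))"
  define y where "y = minv ?A *\<^sub>v bv"
  have Ay: "?A *\<^sub>v y = bv" unfolding y_def
    using B trunc_carrier[of D m N] by (metis assoc_mult_mat_vec bv_def one_mult_mat_vec vec_carrier)
  have dy: "dim_vec y = ?n" using B by (simp add: y_def)
  define ix where "ix \<delta> = (SOME j. j < ?n \<and> ?I ! j = \<delta>)" for \<delta>
  have ixI: "ix (?I ! j) = j" if "j < ?n" for j
  proof -
    have "\<exists>j'. j' < ?n \<and> ?I ! j' = ?I ! j" using that by blast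
    from someI_ex[OF this] have "ix (?I ! j) < ?n \<and> ?I ! (ix (?I ! j)) = ?I ! j" unfolding ix_def .
    then show ?thesis using dI that nth_eq_iff_index_eq by blast
  qed
  define w where "w \<delta> = (if \<delta> \<in> lt D N then y $ ix \<delta> else 0)" for \<delta>
  have wI: "w (?I ! j) = y $ j" if "j < ?n" for j
    using that sI nth_mem ixI unfolding w_def by (metis)
  show ?thesis
  proof (intro exI conjI allI impI ballI)
    fix \<delta> assume "\<delta> \<notin> lt D N" then show "w \<delta> = 0" by (simp add: w_def)
  next
    fix \<gamma> assume g: "\<gamma> \<in> lt D N"
    then obtain i where i: "i < ?n" "\<gamma> = ?I ! i" using sI by (metis in_set_conv_nth)
    have "(\<Sum>\<delta>\<in>lt D N. w \<delta> * gm m \<delta> \<gamma>) = (\<Sum>j<?n. w (?I ! j) * gm m (?I ! j) \<gamma>)"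
      using sum_nth_distinct[OF dI, of "\<lambda>\<delta>. w \<delta> * gm m \<delta> \<gamma>"] sI by simp
    also have "\<dots> = (\<Sum>j<?n. ?A $$ (i,j) * y $ j)"
      using i by (auto simp: wI trunc_idx gm_sym mult.commute intro!: sum.cong)
    also have "\<dots> = (?A *\<^sub>v y) $ i"
      using i trunc_carrier[of D m N] dy by (auto simp: scalar_prod_def lessThan_atLeast0 intro!: sum.cong)
    also have "\<dots> = b \<gamma>" using Ay i by (simp add: bv_def)
    finally show "(\<Sum>\<delta>\<in>lt D N. w \<delta> * gm m \<delta> \<gamma>) = b \<gamma>" .
  qed
qed




lemma lowset_mem: "\<gamma> \<in> lowset D k \<longleftrightarrow> length \<gamma> = D \<and> sum_list \<gamma> \<le> k"
  by (simp add: lowset_def)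

lemma orth_ind:
  assumes bu: "block_unitri D S"
    and h: "\<forall>\<beta>. length \<beta> = D \<and> sum_list \<beta> < k \<longrightarrow> (\<Sum>\<delta>\<in>lowset D (sum_list \<beta>). S \<beta> \<delta> * \<psi> \<delta>) = 0"
  shows "\<forall>\<gamma>. length \<gamma> = D \<and> sum_list \<gamma> < k \<longrightarrow> \<psi> \<gamma> = 0"
proof -
  have "\<forall>\<gamma>. length \<gamma> = D \<and> sum_list \<gamma> = j \<and> j < k \<longrightarrow> \<psi> \<gamma> = 0" for j
  proof (induction j rule: less_induct)
    case (less j)
    show ?case
    proof (intro allI impI)
      fix \<gamma> assume g: "length \<gamma> = D \<and> sum_list \<gamma> = j \<and> j < k"
      have "0 = (\<Sum>\<delta>\<in>lowset D j. S \<gamma> \<delta> * \<psi> \<delta>)" using h g by auto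
      also have "\<dots> = (\<Sum>\<delta>\<in>lowset D j. if \<delta> = \<gamma> then \<psi> \<gamma> else 0)"
      proof (rule sum.cong)
        fix \<delta> assume d: "\<delta> \<in> lowset D j"
        show "S \<gamma> \<delta> * \<psi> \<delta> = (if \<delta> = \<gamma> then \<psi> \<gamma> else 0)"
        proof (cases "sum_list \<delta> < j")
          case True then show ?thesis using less.IH[of "sum_list \<delta>"] d g by (auto simp: lowset_def)
        next
          case False
          then have "sum_list \<delta> = j" using d by (simp add: lowset_def)
          then show ?thesis using bu d g unfolding block_unitri_def mi_def lowset_def by auto
        qed
      qed simp
      also have "\<dots> = \<psi> \<gamma>" using g finite_lowset by (simp add: lowset_def)
      finally show "\<psi> \<gamma> = 0" by simp
    qed
  qed
  then show ?thesis by blast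
qed

lemma sgs_swap: "sgs D m S \<alpha> \<beta> = (\<Sum>\<delta>\<in>lowset D (sum_list \<beta>). S \<beta> \<delta> * (\<Sum>\<gamma>\<in>lowset D (sum_list \<alpha>). S \<alpha> \<gamma> * gm m \<gamma> \<delta>))"
  unfolding sgs_def by (subst sum.swap) (simp add: sum_distrib_left mult_ac)

definition Pcond :: "nat \<Rightarrow> (nat list \<Rightarrow> complex) \<Rightarrow> nat list \<Rightarrow> (nat list \<Rightarrow> complex) \<Rightarrow> bool" where
  "Pcond D m \<alpha> c \<longleftrightarrow> (\<forall>\<gamma>. (length \<gamma> \<noteq> D \<or> sum_list \<gamma> > sum_list \<alpha>) \<longrightarrow> c \<gamma> = 0)
     \<and> (\<forall>\<gamma>. length \<gamma> = D \<and> sum_list \<gamma> = sum_list \<alpha> \<longrightarrow> c \<gamma> = (if \<gamma> = \<alpha> then 1 else 0))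
     \<and> (\<forall>\<gamma>. length \<gamma> = D \<and> sum_list \<gamma> < sum_list \<alpha> \<longrightarrow>
          (\<Sum>\<delta>\<in>lowset D (sum_list \<alpha>). c \<delta> * gm m \<delta> \<gamma>) = 0)"

lemma ldl_Pcond:
  assumes l: "ldl D m S" and a: "length \<alpha> = D"
  shows "Pcond D m \<alpha> (S \<alpha>)"
proof -
  have bu: "block_unitri D S" using l by (simp add: ldl_def)
  let ?\<psi> = "\<lambda>\<gamma>. \<Sum>\<delta>\<in>lowset D (sum_list \<alpha>). S \<alpha> \<delta> * gm m \<delta> \<gamma>"
  have "\<forall>\<gamma>. length \<gamma> = D \<and> sum_list \<gamma> < sum_list \<alpha> \<longrightarrow> ?\<psi> \<gamma> = 0"
  proof (rule orth_ind[OF bu], intro allI impI)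
    fix \<beta> assume b: "length \<beta> = D \<and> sum_list \<beta> < sum_list \<alpha>"
    have "sgs D m S \<alpha> \<beta> = 0" using l a b unfolding ldl_def mi_def by auto
    then show "(\<Sum>\<delta>\<in>lowset D (sum_list \<beta>). S \<beta> \<delta> * ?\<psi> \<delta>) = 0" by (simp add: sgs_swap)
  qed
  then show ?thesis using bu a unfolding Pcond_def block_unitri_def mi_def by auto
qed

lemma Pcond_unique:
  assumes qd: "quasi_definite D m" and a: "length \<alpha> = D"
    and c: "Pcond D m \<alpha> c" and c': "Pcond D m \<alpha> c'"
  shows "c = c'"
proof -
  let ?k = "sum_list \<alpha>"
  define d where "d \<gamma> = c \<gamma> - c' \<gamma>" for \<gamma>
  have dz: "d \<delta> = 0" if "\<delta> \<notin> lt D ?k" for \<delta>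
  proof -
    have c1: "\<And>\<gamma>. length \<gamma> \<noteq> D \<or> sum_list \<gamma> > ?k \<Longrightarrow> c \<gamma> = 0"
     and c2: "\<And>\<gamma>. length \<gamma> = D \<and> sum_list \<gamma> = ?k \<Longrightarrow> c \<gamma> = (if \<gamma> = \<alpha> then 1 else 0)"
      using c unfolding Pcond_def by blast+
    have c1': "\<And>\<gamma>. length \<gamma> \<noteq> D \<or> sum_list \<gamma> > ?k \<Longrightarrow> c' \<gamma> = 0"
     and c2': "\<And>\<gamma>. length \<gamma> = D \<and> sum_list \<gamma> = ?k \<Longrightarrow> c' \<gamma> = (if \<gamma> = \<alpha> then 1 else 0)"
      using c' unfolding Pcond_def by blast+
    have "length \<delta> \<noteq> D \<or> sum_list \<delta> > ?k \<or> (length \<delta> = D \<and> sum_list \<delta> = ?k)"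
      using that unfolding lt_def by auto
    then consider "length \<delta> \<noteq> D \<or> sum_list \<delta> > ?k" | "length \<delta> = D \<and> sum_list \<delta> = ?k" by blast
    then show ?thesis
    proof cases
      case 1 then show ?thesis using c1[OF 1] c1'[OF 1] by (simp add: d_def)
    next
      case 2 then show ?thesis using c2[OF 2] c2'[OF 2] by (simp add: d_def)
    qed
  qed
  show ?thesis
  proof (cases "?k = 0")
    case True
    have "d \<delta> = 0" for \<delta> using dz[of \<delta>] True unfolding lt_def by simp
    then have "d = (\<lambda>_. 0)" by auto
    then show ?thesis unfolding d_def by (metis eq_iff_diff_eq_0 ext)
  next
    case False
    have sub: "lt D ?k \<subseteq> lowset D ?k" by (auto simp: lt_def lowset_def)
    have "d = (\<lambda>_. 0)"
    proof (rule ND[OF qd _ _ ])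
      show "1 \<le> ?k" using False by linarith
      show "\<forall>\<delta>. \<delta> \<notin> lt D ?k \<longrightarrow> d \<delta> = 0" using dz by blast
      show "\<forall>\<gamma>\<in>lt D ?k. (\<Sum>\<delta>\<in>lt D ?k. d \<delta> * gm m \<delta> \<gamma>) = 0"
      proof
        fix \<gamma> assume g: "\<gamma> \<in> lt D ?k"
        have "(\<Sum>\<delta>\<in>lt D ?k. d \<delta> * gm m \<delta> \<gamma>) = (\<Sum>\<delta>\<in>lowset D ?k. d \<delta> * gm m \<delta> \<gamma>)"
          by (rule sum.mono_neutral_left[OF finite_lowset sub]) (use dz in auto)
        also have "\<dots> = (\<Sum>\<delta>\<in>lowset D ?k. c \<delta> * gm m \<delta> \<gamma>) - (\<Sum>\<delta>\<in>lowset D ?k. c' \<delta> * gm m \<delta> \<gamma>)"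
          by (simp add: d_def left_diff_distrib sum_subtractf)
        also have "\<dots> = 0" using c c' g unfolding Pcond_def lt_def by auto
        finally show "(\<Sum>\<delta>\<in>lt D ?k. d \<delta> * gm m \<delta> \<gamma>) = 0" .
      qed
    qed
    then show ?thesis unfolding d_def by (metis eq_iff_diff_eq_0 ext)
  qed
qed

lemma Pcond_ex:
  assumes qd: "quasi_definite D m" and a: "length \<alpha> = D"
  shows "\<exists>c. Pcond D m \<alpha> c"
proof -
  let ?k = "sum_list \<alpha>"
  let ?e = "\<lambda>\<gamma>. if \<gamma> = \<alpha> then (1::complex) else 0"
  show ?thesis
  proof (cases "?k = 0")
    case True
    have "Pcond D m \<alpha> ?e" unfolding Pcond_def
    proof (intro conjI allI impI)
      fix \<gamma> assume "length \<gamma> \<noteq> D \<or> sum_list \<alpha> < sum_list \<gamma>"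
      then have "\<gamma> \<noteq> \<alpha>" using a by auto
      then show "?e \<gamma> = 0" by simp
    next
      fix \<gamma> assume "length \<gamma> = D \<and> sum_list \<gamma> = sum_list \<alpha>"
      then show "?e \<gamma> = (if \<gamma> = \<alpha> then 1 else 0)" by simp
    next
      fix \<gamma> :: "nat list" assume "length \<gamma> = D \<and> sum_list \<gamma> < sum_list \<alpha>"
      then have False using True by linarith
      then show "(\<Sum>\<delta>\<in>lowset D (sum_list \<alpha>). ?e \<delta> * gm m \<delta> \<gamma>) = 0" ..
    qed
    then show ?thesis by blast
  next
    case False
    obtain w where w: "\<forall>\<delta>. \<delta> \<notin> lt D ?k \<longrightarrow> w \<delta> = 0"
        "\<forall>\<gamma>\<in>lt D ?k. (\<Sum>\<delta>\<in>lt D ?k. w \<delta> * gm m \<delta> \<gamma>) = - gm m \<alpha> \<gamma>"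
      using SOL[OF qd, of ?k "\<lambda>\<gamma>. - gm m \<alpha> \<gamma>"] False by auto
    define c where "c \<gamma> = ?e \<gamma> + w \<gamma>" for \<gamma>
    have sub: "lt D ?k \<subseteq> lowset D ?k" by (auto simp: lt_def lowset_def)
    have aL: "\<alpha> \<in> lowset D ?k" using a by (simp add: lowset_def)
    have "Pcond D m \<alpha> c"
      unfolding Pcond_def
    proof (intro conjI allI impI)
      fix \<gamma> assume "length \<gamma> \<noteq> D \<or> sum_list \<alpha> < sum_list \<gamma>"
      then show "c \<gamma> = 0" using w a unfolding c_def lt_def by auto
    next
      fix \<gamma> assume "length \<gamma> = D \<and> sum_list \<gamma> = sum_list \<alpha>"
      then show "c \<gamma> = (if \<gamma> = \<alpha> then 1 else 0)" using w unfolding c_def lt_def by auto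
    next
      fix \<gamma> assume g: "length \<gamma> = D \<and> sum_list \<gamma> < sum_list \<alpha>"
      have "(\<Sum>\<delta>\<in>lowset D ?k. c \<delta> * gm m \<delta> \<gamma>) = (\<Sum>\<delta>\<in>lowset D ?k. ?e \<delta> * gm m \<delta> \<gamma>) + (\<Sum>\<delta>\<in>lowset D ?k. w \<delta> * gm m \<delta> \<gamma>)"
        by (simp add: c_def distrib_right sum.distrib)
      also have "(\<Sum>\<delta>\<in>lowset D ?k. ?e \<delta> * gm m \<delta> \<gamma>) = gm m \<alpha> \<gamma>"
      proof -
        have "(\<Sum>\<delta>\<in>lowset D ?k. ?e \<delta> * gm m \<delta> \<gamma>) = (\<Sum>\<delta>\<in>lowset D ?k. if \<delta> = \<alpha> then gm m \<delta> \<gamma> else 0)"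
          by (rule sum.cong) auto
        also have "\<dots> = gm m \<alpha> \<gamma>" using aL finite_lowset by simp
        finally show ?thesis .
      qed
      also have "(\<Sum>\<delta>\<in>lowset D ?k. w \<delta> * gm m \<delta> \<gamma>) = (\<Sum>\<delta>\<in>lt D ?k. w \<delta> * gm m \<delta> \<gamma>)"
        by (rule sum.mono_neutral_right[OF finite_lowset sub]) (use w in auto)
      also have "\<dots> = - gm m \<alpha> \<gamma>" using w g by (auto simp: lt_def)
      finally show "(\<Sum>\<delta>\<in>lowset D ?k. c \<delta> * gm m \<delta> \<gamma>) = 0" by simp
    qed
    then show ?thesis by blast
  qed
qed

definition Sc :: "nat \<Rightarrow> (nat list \<Rightarrow> complex) \<Rightarrow> nat list \<Rightarrow> nat list \<Rightarrow> complex" where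
  "Sc D m \<alpha> = (if length \<alpha> = D then (SOME c. Pcond D m \<alpha> c) else (\<lambda>_. 0))"

lemma Sc_Pcond: "quasi_definite D m \<Longrightarrow> length \<alpha> = D \<Longrightarrow> Pcond D m \<alpha> (Sc D m \<alpha>)"
  unfolding Sc_def using Pcond_ex someI_ex by (metis (mono_tags, lifting))

lemma Sc_ldl:
  assumes qd: "quasi_definite D m"
  shows "ldl D m (Sc D m)"
proof -
  have P: "Pcond D m \<alpha> (Sc D m \<alpha>)" if "length \<alpha> = D" for \<alpha> using Sc_Pcond[OF qd that] .
  have bu: "block_unitri D (Sc D m)"
    unfolding block_unitri_def mi_def
  proof (intro allI conjI impI)
    fix \<alpha> \<beta> :: "nat list" assume "\<not> (length \<alpha> = D \<and> length \<beta> = D)"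
    then show "Sc D m \<alpha> \<beta> = 0" using P[of \<alpha>] unfolding Pcond_def by (auto simp: Sc_def)
  next
    fix \<alpha> \<beta> :: "nat list" assume "length \<alpha> = D \<and> length \<beta> = D \<and> sum_list \<alpha> < sum_list \<beta>"
    then show "Sc D m \<alpha> \<beta> = 0" using P[of \<alpha>] unfolding Pcond_def by auto
  next
    fix \<alpha> \<beta> :: "nat list" assume "length \<alpha> = D \<and> length \<beta> = D \<and> sum_list \<alpha> = sum_list \<beta>"
    then show "Sc D m \<alpha> \<beta> = (if \<alpha> = \<beta> then 1 else 0)" using P[of \<alpha>] unfolding Pcond_def by auto
  qed
  have z: "sgs D m (Sc D m) \<alpha> \<beta> = 0" if a: "length \<alpha> = D" and b: "length \<beta> = D"
      and lt: "sum_list \<beta> < sum_list \<alpha>" for \<alpha> \<beta>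
  proof -
    have "sgs D m (Sc D m) \<alpha> \<beta> = (\<Sum>\<delta>\<in>lowset D (sum_list \<beta>). Sc D m \<beta> \<delta> *
            (\<Sum>\<gamma>\<in>lowset D (sum_list \<alpha>). Sc D m \<alpha> \<gamma> * gm m \<gamma> \<delta>))" by (rule sgs_swap)
    also have "\<dots> = 0"
    proof (rule sum.neutral, rule ballI)
      fix \<delta> assume "\<delta> \<in> lowset D (sum_list \<beta>)"
      then have "length \<delta> = D" "sum_list \<delta> < sum_list \<alpha>" using lt by (auto simp: lowset_def)
      then show "Sc D m \<beta> \<delta> * (\<Sum>\<gamma>\<in>lowset D (sum_list \<alpha>). Sc D m \<alpha> \<gamma> * gm m \<gamma> \<delta>) = 0"
        using P[OF a] unfolding Pcond_def by auto
    qed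
    finally show ?thesis .
  qed
  have sym: "sgs D m S \<alpha> \<beta> = sgs D m S \<beta> \<alpha>" for S \<alpha> \<beta>
    unfolding sgs_def by (subst sum.swap) (simp add: gm_sym mult_ac)
  show ?thesis unfolding ldl_def mi_def
  proof (intro conjI allI impI)
    fix \<alpha> \<beta> :: "nat list" assume h: "length \<alpha> = D \<and> length \<beta> = D \<and> sum_list \<alpha> \<noteq> sum_list \<beta>"
    show "sgs D m (Sc D m) \<alpha> \<beta> = 0"
    proof (cases "sum_list \<beta> < sum_list \<alpha>")
      case True then show ?thesis using z h by blast
    next
      case False then have "sum_list \<alpha> < sum_list \<beta>" using h by auto
      then show ?thesis using z[of \<beta> \<alpha>] h sym[of "Sc D m" \<alpha> \<beta>] by simp
    qed
  qed (rule bu)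
qed

lemma ldl_unique:
  assumes qd: "quasi_definite D m" and l: "ldl D m S" and l': "ldl D m S'"
  shows "S = S'"
proof (intro ext)
  fix \<alpha> \<beta> :: "nat list"
  show "S \<alpha> \<beta> = S' \<alpha> \<beta>"
  proof (cases "length \<alpha> = D")
    case True
    then show ?thesis using Pcond_unique[OF qd True ldl_Pcond[OF l True] ldl_Pcond[OF l' True]] by simp
  next
    case False
    then show ?thesis using l l' unfolding ldl_def block_unitri_def mi_def by auto
  qed
qed

lemma Sfac_ldl: "quasi_definite D m \<Longrightarrow> ldl D m (Sfac D m)"
  unfolding Sfac_def using Sc_ldl ldl_unique by (metis theI)

lemma Sfac_Pcond: "quasi_definite D m \<Longrightarrow> length \<alpha> = D \<Longrightarrow> Pcond D m \<alpha> (Sfac D m \<alpha>)"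
  using Sfac_ldl ldl_Pcond by blast




lemma mult_mat_entry:
  assumes "A \<in> carrier_mat p r" "B \<in> carrier_mat r s" "i < p" "j < s"
  shows "(A * B) $$ (i,j) = (\<Sum>b<r. A $$ (i,b) * B $$ (b,j))"
  using assms by (auto simp: scalar_prod_def lessThan_atLeast0 intro!: sum.cong)

lemma monval_add: "length x = length \<gamma> \<Longrightarrow> length \<delta> = length \<gamma> \<Longrightarrow>
  monval x (map2 (+) \<gamma> \<delta>) = monval x \<gamma> * monval x \<delta>"
proof (induction x arbitrary: \<gamma> \<delta>)
  case Nil then show ?case by (simp add: monval_def)
next
  case (Cons a x) then show ?case by (cases \<gamma>; cases \<delta>) (auto simp: monval_def power_add mult_ac)
qed

lemma gm_pert:
  assumes "\<forall>i<q. length (pts i) = D" "length \<gamma> = D" "length \<delta> = D"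
  shows "gm (dirac_pert m q \<xi> pts) \<gamma> \<delta> = gm m \<gamma> \<delta> +
     (\<Sum>i<q. \<xi> i * monval (map of_real (pts i)) \<gamma> * monval (map of_real (pts i)) \<delta>)"
  unfolding gm_def dirac_pert_def using assms by (auto simp: monval_add mult.assoc intro!: sum.cong)

definition phi :: "nat list set \<Rightarrow> (nat list \<Rightarrow> complex) \<Rightarrow> (nat list \<Rightarrow> complex) \<Rightarrow> nat list \<Rightarrow> complex" where
  "phi L m a \<delta> = (\<Sum>\<gamma>\<in>L. a \<gamma> * gm m \<gamma> \<delta>)"

definition ev :: "nat list set \<Rightarrow> complex list \<Rightarrow> (nat list \<Rightarrow> complex) \<Rightarrow> complex" where
  "ev L x a = (\<Sum>\<gamma>\<in>L. a \<gamma> * monval x \<gamma>)"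

lemma lin_sum: "(\<Sum>\<delta>\<in>L. (\<Sum>j\<in>J. F j \<delta>) * (Y \<delta> :: complex)) = (\<Sum>j\<in>J. \<Sum>\<delta>\<in>L. F j \<delta> * Y \<delta>)"
  by (simp add: sum_distrib_right) (rule sum.swap)

lemma lin_scale: "(\<Sum>\<delta>\<in>L. (c * a \<delta>) * (Y \<delta> :: complex)) = c * (\<Sum>\<delta>\<in>L. a \<delta> * Y \<delta>)"
  by (simp add: sum_distrib_left mult_ac)

lemma lin_diff: "(\<Sum>\<delta>\<in>L. (a \<delta> - b \<delta>) * (Y \<delta> :: complex)) = (\<Sum>\<delta>\<in>L. a \<delta> * Y \<delta>) - (\<Sum>\<delta>\<in>L. b \<delta> * Y \<delta>)"
  by (simp add: left_diff_distrib sum_subtractf)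

lemma phi_sum: "phi L m (\<lambda>\<gamma>. \<Sum>j\<in>J. F j \<gamma>) \<delta> = (\<Sum>j\<in>J. phi L m (F j) \<delta>)"
  unfolding phi_def by (rule lin_sum)
lemma phi_scale: "phi L m (\<lambda>\<gamma>. c * a \<gamma>) \<delta> = c * phi L m a \<delta>"
  unfolding phi_def by (rule lin_scale)
lemma phi_diff: "phi L m (\<lambda>\<gamma>. a \<gamma> - b \<gamma>) \<delta> = phi L m a \<delta> - phi L m b \<delta>"
  unfolding phi_def by (rule lin_diff)
lemma ev_sum: "ev L x (\<lambda>\<gamma>. \<Sum>j\<in>J. F j \<gamma>) = (\<Sum>j\<in>J. ev L x (F j))"
  unfolding ev_def by (rule lin_sum)
lemma ev_scale: "ev L x (\<lambda>\<gamma>. c * a \<gamma>) = c * ev L x a"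
  unfolding ev_def by (rule lin_scale)
lemma ev_diff: "ev L x (\<lambda>\<gamma>. a \<gamma> - b \<gamma>) = ev L x a - ev L x b"
  unfolding ev_def by (rule lin_diff)

lemma pair_sym: "(\<Sum>\<delta>\<in>L. b \<delta> * phi L m a \<delta>) = (\<Sum>\<delta>\<in>L. a \<delta> * phi L m b \<delta>)"
  unfolding phi_def by (simp add: sum_distrib_left) (subst sum.swap, simp add: gm_sym mult_ac)

lemma phi_pert:
  assumes pts: "\<forall>i<q. length (pts i) = D" and L: "\<forall>\<gamma>\<in>L. length \<gamma> = D" and d: "length \<delta> = D"
  shows "phi L (dirac_pert m q \<xi> pts) a \<delta> = phi L m a \<delta> +
     (\<Sum>i<q. \<xi> i * ev L (map of_real (pts i)) a * monval (map of_real (pts i)) \<delta>)"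
proof -
  have "phi L (dirac_pert m q \<xi> pts) a \<delta> = (\<Sum>\<gamma>\<in>L. a \<gamma> * gm m \<gamma> \<delta> +
     (\<Sum>i<q. a \<gamma> * (\<xi> i * monval (map of_real (pts i)) \<gamma> * monval (map of_real (pts i)) \<delta>)))"
    unfolding phi_def
  proof (rule sum.cong[OF refl])
    fix \<gamma> assume "\<gamma> \<in> L"
    then have "length \<gamma> = D" using L by auto
    from gm_pert[OF pts this d] show "a \<gamma> * gm (dirac_pert m q \<xi> pts) \<gamma> \<delta> = a \<gamma> * gm m \<gamma> \<delta> +
     (\<Sum>i<q. a \<gamma> * (\<xi> i * monval (map of_real (pts i)) \<gamma> * monval (map of_real (pts i)) \<delta>))"
      by (simp add: distrib_left sum_distrib_left)
  qed
  also have "\<dots> = phi L m a \<delta> + (\<Sum>i<q. \<Sum>\<gamma>\<in>L. a \<gamma> * (\<xi> i * monval (map of_real (pts i)) \<gamma> * monval (map of_real (pts i)) \<delta>))"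
    unfolding phi_def by (simp add: sum.distrib) (rule sum.swap)
  also have "\<dots> = phi L m a \<delta> + (\<Sum>i<q. \<xi> i * ev L (map of_real (pts i)) a * monval (map of_real (pts i)) \<delta>)"
    unfolding ev_def by (simp add: sum_distrib_left sum_distrib_right mult_ac)
  finally show ?thesis .
qed

lemma sgs_sym: "sgs D m S \<alpha> \<beta> = sgs D m S \<beta> \<alpha>"
  unfolding sgs_def by (subst sum.swap) (simp add: gm_sym mult_ac)

lemma Sfac_zero: "quasi_definite D m \<Longrightarrow> \<gamma> \<notin> lowset D (sum_list \<alpha>) \<Longrightarrow> Sfac D m \<alpha> \<gamma> = 0"
proof -
  assume qd: "quasi_definite D m" and g: "\<gamma> \<notin> lowset D (sum_list \<alpha>)"
  show ?thesis
  proof (cases "length \<alpha> = D")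
    case True
    then show ?thesis using Sfac_Pcond[OF qd True] g unfolding Pcond_def lowset_def by auto
  next
    case False
    then show ?thesis using Sfac_ldl[OF qd] unfolding ldl_def block_unitri_def mi_def by auto
  qed
qed

lemma Sfac_diag: "quasi_definite D m \<Longrightarrow> length \<alpha> = D \<Longrightarrow> length \<gamma> = D \<Longrightarrow> sum_list \<gamma> = sum_list \<alpha> \<Longrightarrow>
   Sfac D m \<alpha> \<gamma> = (if \<gamma> = \<alpha> then 1 else 0)"
  using Sfac_Pcond unfolding Pcond_def by blast

lemma sgs_conv:
  assumes qd: "quasi_definite D m" and "sum_list \<alpha> \<le> n" "sum_list \<beta> \<le> n"
  shows "sgs D m (Sfac D m) \<alpha> \<beta> = (\<Sum>\<delta>\<in>lowset D n. Sfac D m \<beta> \<delta> * phi (lowset D n) m (Sfac D m \<alpha>) \<delta>)"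
proof -
  have sa: "lowset D (sum_list \<alpha>) \<subseteq> lowset D n" "lowset D (sum_list \<beta>) \<subseteq> lowset D n"
    using assms by (auto simp: lowset_def)
  have "sgs D m (Sfac D m) \<alpha> \<beta> = (\<Sum>\<delta>\<in>lowset D (sum_list \<beta>). Sfac D m \<beta> \<delta> * phi (lowset D n) m (Sfac D m \<alpha>) \<delta>)"
    unfolding sgs_swap phi_def
    by (rule sum.cong[OF refl], rule arg_cong[where f = "\<lambda>t. _ * t"], rule sum.mono_neutral_left[OF finite_lowset sa(1)])
       (use Sfac_zero[OF qd] in auto)
  also have "\<dots> = (\<Sum>\<delta>\<in>lowset D n. Sfac D m \<beta> \<delta> * phi (lowset D n) m (Sfac D m \<alpha>) \<delta>)"
    by (rule sum.mono_neutral_left[OF finite_lowset sa(2)]) (use Sfac_zero[OF qd] in auto)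
  finally show ?thesis .
qed

lemma Zlem:
  assumes qd: "quasi_definite D m" and N: "1 \<le> N" "N \<le> n+1"
    and supp: "\<forall>\<gamma>. \<gamma> \<notin> lt D N \<longrightarrow> g \<gamma> = 0"
    and h: "\<forall>\<beta>. length \<beta> = D \<and> sum_list \<beta> < N \<longrightarrow>
              (\<Sum>\<delta>\<in>lowset D n. Sfac D m \<beta> \<delta> * phi (lowset D n) m g \<delta>) = 0"
  shows "g = (\<lambda>_. 0)"
proof -
  let ?L = "lowset D n" let ?S = "Sfac D m"
  have bu: "block_unitri D ?S" using Sfac_ldl[OF qd] by (simp add: ldl_def)
  have ltL: "lt D N \<subseteq> ?L" using N by (auto simp: lt_def lowset_def)
  have "\<forall>\<gamma>. length \<gamma> = D \<and> sum_list \<gamma> < N \<longrightarrow> phi ?L m g \<gamma> = 0"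
  proof (rule orth_ind[OF bu], intro allI impI)
    fix \<beta> assume b: "length \<beta> = D \<and> sum_list \<beta> < N"
    have sub: "lowset D (sum_list \<beta>) \<subseteq> ?L" using b N by (auto simp: lowset_def)
    have "(\<Sum>\<delta>\<in>lowset D (sum_list \<beta>). ?S \<beta> \<delta> * phi ?L m g \<delta>) = (\<Sum>\<delta>\<in>?L. ?S \<beta> \<delta> * phi ?L m g \<delta>)"
      by (rule sum.mono_neutral_left[OF finite_lowset sub]) (use Sfac_zero[OF qd] in auto)
    then show "(\<Sum>\<delta>\<in>lowset D (sum_list \<beta>). ?S \<beta> \<delta> * phi ?L m g \<delta>) = 0" using h b by simp
  qed
  moreover have "phi ?L m g \<gamma> = (\<Sum>\<delta>\<in>lt D N. g \<delta> * gm m \<delta> \<gamma>)" for \<gamma>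
    unfolding phi_def by (rule sum.mono_neutral_right[OF finite_lowset ltL]) (use supp in auto)
  ultimately show ?thesis using ND[OF qd N(1) supp] by (auto simp: lt_def)
qed




lemma Hblk_carrier: "Hblk D m k \<in> carrier_mat (length (mons D k)) (length (mons D k))"
  unfolding Hblk_def Let_def by auto

lemma Hblk_idx: "a < length (mons D k) \<Longrightarrow> b < length (mons D k) \<Longrightarrow>
   Hblk D m k $$ (a,b) = sgs D m (Sfac D m) (mons D k ! a) (mons D k ! b)"
  unfolding Hblk_def Let_def by auto

lemma mons_nth: "a < length (mons D k) \<Longrightarrow> length (mons D k ! a) = D \<and> sum_list (mons D k ! a) = k"
  using set_mons[of D k] nth_mem by blast

lemma Sfac_mons: "quasi_definite D m \<Longrightarrow> a < length (mons D k) \<Longrightarrow> b < length (mons D k) \<Longrightarrow>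
   Sfac D m (mons D k ! a) (mons D k ! b) = (if a = b then 1 else 0)"
  using Sfac_diag[of D m "mons D k ! a" "mons D k ! b"] mons_nth[of a D k] mons_nth[of b D k]
    distinct_mons[of D k] nth_eq_iff_index_eq by auto

lemma Hblk_det:
  assumes qd: "quasi_definite D m"
  shows "det (Hblk D m k) \<noteq> 0"
proof (rule det_nz_kernel[OF Hblk_carrier])
  let ?I = "mons D k" let ?r = "length (mons D k)" let ?S = "Sfac D m" let ?L = "lowset D k"
  fix v :: "complex vec" assume v: "v \<in> carrier_vec ?r" and Hv: "Hblk D m k *\<^sub>v v = 0\<^sub>v ?r"
  define g where "g \<gamma> = (\<Sum>a<?r. v $ a * ?S (?I ! a) \<gamma>)" for \<gamma>
  have Hv': "(\<Sum>a<?r. Hblk D m k $$ (b,a) * v $ a) = 0" if "b < ?r" for b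
  proof -
    have "(Hblk D m k *\<^sub>v v) $ b = 0" using Hv that by simp
    then show ?thesis using that v Hblk_carrier[of D m k]
      by (auto simp: scalar_prod_def lessThan_atLeast0 intro!: sum.cong)
  qed
  have "g = (\<lambda>_. 0)"
  proof (rule Zlem[OF qd, of "k+1" k])
    show "\<forall>\<gamma>. \<gamma> \<notin> lt D (k+1) \<longrightarrow> g \<gamma> = 0"
    proof (intro allI impI)
      fix \<gamma> assume "\<gamma> \<notin> lt D (k+1)"
      then have "\<gamma> \<notin> lowset D (sum_list (?I ! a))" if "a < ?r" for a
        using mons_nth[OF that] by (auto simp: lt_def lowset_def)
      then show "g \<gamma> = 0" unfolding g_def using Sfac_zero[OF qd] by (auto intro!: sum.neutral)
    qed
    show "\<forall>\<beta>. length \<beta> = D \<and> sum_list \<beta> < k + 1 \<longrightarrow> (\<Sum>\<delta>\<in>?L. ?S \<beta> \<delta> * phi ?L m g \<delta>) = 0"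
    proof (intro allI impI)
      fix \<beta> assume b: "length \<beta> = D \<and> sum_list \<beta> < k + 1"
      have "(\<Sum>\<delta>\<in>?L. ?S \<beta> \<delta> * phi ?L m g \<delta>) = (\<Sum>a<?r. v $ a * (\<Sum>\<delta>\<in>?L. ?S \<beta> \<delta> * phi ?L m (?S (?I ! a)) \<delta>))"
        unfolding g_def phi_sum phi_scale by (simp add: sum_distrib_left mult_ac) (rule sum.swap)
      also have "\<dots> = (\<Sum>a<?r. v $ a * sgs D m ?S (?I ! a) \<beta>)"
        using sgs_conv[OF qd, of "?I ! _" k \<beta>] mons_nth b by simp
      also have "\<dots> = 0"
      proof (cases "sum_list \<beta> = k")
        case True
        then have "\<beta> \<in> set ?I" using b set_mons by blast
        then obtain e where e: "e < ?r" "\<beta> = ?I ! e" by (metis in_set_conv_nth)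
        have "(\<Sum>a<?r. v $ a * sgs D m ?S (?I ! a) \<beta>) = (\<Sum>a<?r. Hblk D m k $$ (e,a) * v $ a)"
          using e by (auto simp: Hblk_idx sgs_sym mult.commute intro!: sum.cong)
        then show ?thesis using Hv' e by simp
      next
        case False
        then have "sgs D m ?S (?I ! a) \<beta> = 0" if "a < ?r" for a
          using Sfac_ldl[OF qd] mons_nth[OF that] b unfolding ldl_def mi_def by auto
        then show ?thesis by simp
      qed
      finally show "(\<Sum>\<delta>\<in>?L. ?S \<beta> \<delta> * phi ?L m g \<delta>) = 0" .
    qed
  qed auto
  then have "v $ e = 0" if e: "e < ?r" for e
  proof -
    have "0 = g (?I ! e)" using \<open>g = _\<close> by simp
    also have "\<dots> = (\<Sum>a<?r. if a = e then v $ e else 0)"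
      unfolding g_def by (rule sum.cong) (use e Sfac_mons[OF qd] in auto)
    also have "\<dots> = v $ e" using e by simp
    finally show ?thesis by simp
  qed
  then show "v = 0\<^sub>v ?r" using v by auto
qed

lemma Hblk_inv:
  assumes qd: "quasi_definite D m"
  shows "minv (Hblk D m k) \<in> carrier_mat (length (mons D k)) (length (mons D k)) \<and>
     Hblk D m k * minv (Hblk D m k) = 1\<^sub>m (length (mons D k)) \<and>
     minv (Hblk D m k) * Hblk D m k = 1\<^sub>m (length (mons D k))"
  by (rule minv_props[OF Hblk_carrier Hblk_det[OF qd]])

lemma Pvec_conv:
  assumes qd: "quasi_definite D m" and k: "k \<le> n" and a: "a < length (mons D k)"
  shows "Pvec D m k x $$ (a,0) = ev (lowset D n) x (Sfac D m (mons D k ! a))"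
proof -
  have sub: "lowset D k \<subseteq> lowset D n" using k by (auto simp: lowset_def)
  have "Pvec D m k x $$ (a,0) = (\<Sum>\<gamma>\<in>lowset D k. Sfac D m (mons D k ! a) \<gamma> * monval x \<gamma>)"
    unfolding Pvec_def Let_def using a by simp
  also have "\<dots> = ev (lowset D n) x (Sfac D m (mons D k ! a))"
    unfolding ev_def by (rule sum.mono_neutral_left[OF finite_lowset sub]) (use Sfac_zero[OF qd] mons_nth[OF a] in auto)
  finally show ?thesis .
qed

lemma Pvec_carrier: "Pvec D m k x \<in> carrier_mat (length (mons D k)) 1"
  unfolding Pvec_def Let_def by auto

definition kv :: "nat \<Rightarrow> (nat list \<Rightarrow> complex) \<Rightarrow> nat \<Rightarrow> complex list \<Rightarrow> nat list \<Rightarrow> complex" where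
  "kv D m n x \<gamma> = (\<Sum>k<n. \<Sum>a<length (mons D k). \<Sum>b<length (mons D k).
      minv (Hblk D m k) $$ (a,b) * ev (lowset D n) x (Sfac D m (mons D k ! b)) * Sfac D m (mons D k ! a) \<gamma>)"

lemma kernel_ev:
  assumes qd: "quasi_definite D m"
  shows "kernel D m n y x = ev (lowset D n) y (kv D m n x)"
proof -
  have "(transpose_mat (Pvec D m k y) * minv (Hblk D m k) * Pvec D m k x) $$ (0,0) =
     (\<Sum>a<length (mons D k). \<Sum>b<length (mons D k).
      minv (Hblk D m k) $$ (a,b) * ev (lowset D n) x (Sfac D m (mons D k ! b)) * ev (lowset D n) y (Sfac D m (mons D k ! a)))"
    if k: "k < n" for k
  proof -
    let ?r = "length (mons D k)"
    have Hi: "minv (Hblk D m k) \<in> carrier_mat ?r ?r" using Hblk_inv[OF qd] by blast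
    have Pt: "transpose_mat (Pvec D m k y) \<in> carrier_mat 1 ?r" using Pvec_carrier by auto
    have TH: "transpose_mat (Pvec D m k y) * minv (Hblk D m k) \<in> carrier_mat 1 ?r" using Hi Pt by auto
    have "(transpose_mat (Pvec D m k y) * minv (Hblk D m k) * Pvec D m k x) $$ (0,0) =
       (\<Sum>b<?r. (transpose_mat (Pvec D m k y) * minv (Hblk D m k)) $$ (0,b) * Pvec D m k x $$ (b,0))"
      by (rule mult_mat_entry[OF TH Pvec_carrier]) auto
    also have "\<dots> = (\<Sum>b<?r. (\<Sum>a<?r. Pvec D m k y $$ (a,0) * minv (Hblk D m k) $$ (a,b)) * Pvec D m k x $$ (b,0))"
    proof (rule sum.cong[OF refl])
      fix b assume b: "b \<in> {..<?r}"
      have tr: "transpose_mat (Pvec D m k y) $$ (0,a) = Pvec D m k y $$ (a,0)" if "a < ?r" for a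
        using that Pvec_carrier[of D m k y] by auto
      show "(transpose_mat (Pvec D m k y) * minv (Hblk D m k)) $$ (0,b) * Pvec D m k x $$ (b,0) =
         (\<Sum>a<?r. Pvec D m k y $$ (a,0) * minv (Hblk D m k) $$ (a,b)) * Pvec D m k x $$ (b,0)"
        using mult_mat_entry[OF Pt Hi, of 0 b] b tr by simp
    qed
    also have "\<dots> = (\<Sum>a<?r. \<Sum>b<?r. minv (Hblk D m k) $$ (a,b) * Pvec D m k x $$ (b,0) * Pvec D m k y $$ (a,0))"
      by (simp add: sum_distrib_right sum_distrib_left mult_ac) (rule sum.swap)
    also have "\<dots> = (\<Sum>a<?r. \<Sum>b<?r.
      minv (Hblk D m k) $$ (a,b) * ev (lowset D n) x (Sfac D m (mons D k ! b)) * ev (lowset D n) y (Sfac D m (mons D k ! a)))"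
      using Pvec_conv[OF qd, of k n] k by simp
    finally show ?thesis .
  qed
  then show ?thesis
    unfolding kernel_def kv_def ev_sum ev_scale by simp
qed




lemma lin_sum': "(\<Sum>\<delta>\<in>L. (s \<delta> :: complex) * (\<Sum>j\<in>J. G j \<delta>)) = (\<Sum>j\<in>J. \<Sum>\<delta>\<in>L. s \<delta> * G j \<delta>)"
  by (simp add: sum_distrib_left) (rule sum.swap)
lemma lin_scale': "(\<Sum>\<delta>\<in>L. (s \<delta> :: complex) * (c * G \<delta>)) = c * (\<Sum>\<delta>\<in>L. s \<delta> * G \<delta>)"
  by (simp add: sum_distrib_left mult_ac)
lemma lin_diff': "(\<Sum>\<delta>\<in>L. (s \<delta> :: complex) * (A \<delta> - B \<delta>)) = (\<Sum>\<delta>\<in>L. s \<delta> * A \<delta>) - (\<Sum>\<delta>\<in>L. s \<delta> * B \<delta>)"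
  by (simp add: right_diff_distrib sum_subtractf)

lemma sum_single: "j \<in> A \<Longrightarrow> finite A \<Longrightarrow> (\<And>k. k \<in> A \<Longrightarrow> k \<noteq> j \<Longrightarrow> T k = 0) \<Longrightarrow> sum T A = (T j :: complex)"
  by (metis sum.remove sum.neutral DiffE insertCI add_0_right insert_Diff)

lemma repro:
  assumes qd: "quasi_definite D m" and n: "1 \<le> n"
    and f: "\<forall>\<gamma>. \<gamma> \<notin> lt D n \<longrightarrow> f \<gamma> = 0"
  shows "(\<Sum>\<delta>\<in>lowset D n. kv D m n x \<delta> * phi (lowset D n) m f \<delta>) = ev (lowset D n) x f"
proof -
  let ?L = "lowset D n" let ?S = "Sfac D m" let ?I = "\<lambda>k. mons D k" let ?r = "\<lambda>k. length (mons D k)"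
  let ?Hi = "\<lambda>k. minv (Hblk D m k)"
  define c where "c k a = (\<Sum>\<delta>\<in>?L. ?S (?I k ! a) \<delta> * phi ?L m f \<delta>)" for k a
  define g where "g = (\<lambda>\<gamma>. f \<gamma> - (\<Sum>k<n. \<Sum>a<?r k. \<Sum>b<?r k. c k a * ?Hi k $$ (a,b) * ?S (?I k ! b) \<gamma>))"
  have LHS: "(\<Sum>\<delta>\<in>?L. kv D m n x \<delta> * phi ?L m f \<delta>) =
      (\<Sum>k<n. \<Sum>a<?r k. \<Sum>b<?r k. c k a * ?Hi k $$ (a,b) * ev ?L x (?S (?I k ! b)))"
  proof -
    have "(\<Sum>\<delta>\<in>?L. kv D m n x \<delta> * phi ?L m f \<delta>) =
      (\<Sum>k<n. \<Sum>a<?r k. \<Sum>b<?r k. ?Hi k $$ (a,b) * ev ?L x (?S (?I k ! b)) * c k a)"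
      unfolding kv_def lin_sum lin_scale c_def by (rule refl)
    also have "\<dots> = (\<Sum>k<n. \<Sum>a<?r k. \<Sum>b<?r k. c k a * ?Hi k $$ (a,b) * ev ?L x (?S (?I k ! b)))"
      by (rule sum.cong[OF refl], rule sum.cong[OF refl], rule sum.cong[OF refl]) (rule mult.commute[THEN trans], rule mult.assoc[symmetric])
    finally show ?thesis .
  qed
  have "g = (\<lambda>_. 0)"
  proof (rule Zlem[OF qd n, of n])
    show "\<forall>\<gamma>. \<gamma> \<notin> lt D n \<longrightarrow> g \<gamma> = 0"
    proof (intro allI impI)
      fix \<gamma> assume g: "\<gamma> \<notin> lt D n"
      have "?S (?I k ! b) \<gamma> = 0" if "k < n" "b < ?r k" for k b
        using Sfac_zero[OF qd] mons_nth[OF that(2)] g that(1) by (auto simp: lt_def lowset_def)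
      then show "g \<gamma> = 0" unfolding g_def using f g by simp
    qed
    show "\<forall>\<beta>. length \<beta> = D \<and> sum_list \<beta> < n \<longrightarrow> (\<Sum>\<delta>\<in>?L. ?S \<beta> \<delta> * phi ?L m g \<delta>) = 0"
    proof (intro allI impI)
      fix \<beta> assume b: "length \<beta> = D \<and> sum_list \<beta> < n"
      let ?j = "sum_list \<beta>"
      have "\<beta> \<in> set (?I ?j)" using b set_mons by blast
      then obtain e where e: "e < ?r ?j" "\<beta> = ?I ?j ! e" by (metis in_set_conv_nth)
      have Hi: "?Hi ?j \<in> carrier_mat (?r ?j) (?r ?j)" "?Hi ?j * Hblk D m ?j = 1\<^sub>m (?r ?j)"
        using Hblk_inv[OF qd] by blast+
      have ce: "c ?j e = (\<Sum>\<delta>\<in>?L. f \<delta> * phi ?L m (?S \<beta>) \<delta>)"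
        unfolding c_def e(2)[symmetric] by (rule pair_sym)
      have "(\<Sum>\<delta>\<in>?L. ?S \<beta> \<delta> * phi ?L m g \<delta>) = (\<Sum>\<delta>\<in>?L. g \<delta> * phi ?L m (?S \<beta>) \<delta>)"
        by (rule pair_sym)
      also have "\<dots> = c ?j e -
         (\<Sum>k<n. \<Sum>a<?r k. \<Sum>b<?r k. c k a * ?Hi k $$ (a,b) * (\<Sum>\<delta>\<in>?L. ?S (?I k ! b) \<delta> * phi ?L m (?S \<beta>) \<delta>))"
        unfolding g_def lin_diff lin_sum lin_scale ce by (rule refl)
      also have "(\<Sum>k<n. \<Sum>a<?r k. \<Sum>b<?r k. c k a * ?Hi k $$ (a,b) * (\<Sum>\<delta>\<in>?L. ?S (?I k ! b) \<delta> * phi ?L m (?S \<beta>) \<delta>))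
          = (\<Sum>k<n. \<Sum>a<?r k. \<Sum>b<?r k. c k a * ?Hi k $$ (a,b) * sgs D m ?S (?I k ! b) \<beta>)"
      proof (intro sum.cong refl)
        fix k b assume k: "k \<in> {..<n}" and bb: "b \<in> {..<?r k}"
        have "sgs D m ?S \<beta> (?I k ! b) = (\<Sum>\<delta>\<in>?L. ?S (?I k ! b) \<delta> * phi ?L m (?S \<beta>) \<delta>)"
          by (rule sgs_conv[OF qd]) (use b k mons_nth[of b D k] bb in auto)
        then show "c k a * ?Hi k $$ (a,b) * (\<Sum>\<delta>\<in>?L. ?S (?I k ! b) \<delta> * phi ?L m (?S \<beta>) \<delta>) =
           c k a * ?Hi k $$ (a,b) * sgs D m ?S (?I k ! b) \<beta>" for a
          using sgs_sym[of D m ?S \<beta> "?I k ! b"] by simp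
      qed
      also have "\<dots> = (\<Sum>a<?r ?j. \<Sum>b<?r ?j. c ?j a * ?Hi ?j $$ (a,b) * sgs D m ?S (?I ?j ! b) \<beta>)"
      proof (rule sum_single)
        show "?j \<in> {..<n}" using b by simp
        fix k assume k: "k \<in> {..<n}" "k \<noteq> ?j"
        have "sgs D m ?S (?I k ! bb) \<beta> = 0" if "bb < ?r k" for bb
          using Sfac_ldl[OF qd] mons_nth[OF that] b k unfolding ldl_def mi_def by auto
        then show "(\<Sum>a<?r k. \<Sum>b<?r k. c k a * ?Hi k $$ (a,b) * sgs D m ?S (?I k ! b) \<beta>) = 0" by simp
      qed simp
      also have "\<dots> = (\<Sum>a<?r ?j. c ?j a * (?Hi ?j * Hblk D m ?j) $$ (a,e))"
      proof (rule sum.cong[OF refl])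
        fix a assume a: "a \<in> {..<?r ?j}"
        have "(?Hi ?j * Hblk D m ?j) $$ (a,e) = (\<Sum>b<?r ?j. ?Hi ?j $$ (a,b) * Hblk D m ?j $$ (b,e))"
          using mult_mat_entry[OF Hi(1) Hblk_carrier, of a e] a e by simp
        also have "\<dots> = (\<Sum>b<?r ?j. ?Hi ?j $$ (a,b) * sgs D m ?S (?I ?j ! b) \<beta>)"
          using e by (auto simp: Hblk_idx intro!: sum.cong)
        finally show "(\<Sum>b<?r ?j. c ?j a * ?Hi ?j $$ (a,b) * sgs D m ?S (?I ?j ! b) \<beta>) =
           c ?j a * (?Hi ?j * Hblk D m ?j) $$ (a,e)"
          by (simp add: sum_distrib_left mult_ac)
      qed
      also have "\<dots> = (\<Sum>a<?r ?j. if a = e then c ?j e else 0)"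
      proof (rule sum.cong[OF refl])
        fix a assume a: "a \<in> {..<?r ?j}"
        then show "c ?j a * (?Hi ?j * Hblk D m ?j) $$ (a,e) = (if a = e then c ?j e else 0)"
          using Hi(2) e(1) by simp
      qed
      also have "\<dots> = c ?j e" using e(1) by simp
      finally show "(\<Sum>\<delta>\<in>?L. ?S \<beta> \<delta> * phi ?L m g \<delta>) = 0" by simp
    qed
  qed (use n in auto)
  then have "ev ?L x g = 0" by (simp add: ev_def)
  then have "ev ?L x f = (\<Sum>k<n. \<Sum>a<?r k. \<Sum>b<?r k. c k a * ?Hi k $$ (a,b) * ev ?L x (?S (?I k ! b)))"
    unfolding g_def ev_diff ev_sum ev_scale by simp
  then show ?thesis using LHS by simp
qed




lemma mult_mat_vec_entry:
  assumes "A \<in> carrier_mat p r" "v \<in> carrier_vec r" "i < p"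
  shows "(A *\<^sub>v v) $ i = (\<Sum>j<r. A $$ (i,j) * v $ j)"
  using assms by (auto simp: scalar_prod_def lessThan_atLeast0 intro!: sum.cong)

lemma mat_vec_delta:
  fixes K :: "nat \<Rightarrow> nat \<Rightarrow> complex"
  assumes v: "v \<in> carrier_vec q" and i: "i < q"
  shows "(mat q q (\<lambda>(i,j). (if i = j then 1 else 0) + c i * K i j) *\<^sub>v v) $ i = v $ i + c i * (\<Sum>j<q. v $ j * K i j)"
proof -
  have "(mat q q (\<lambda>(i,j). (if i = j then 1 else 0) + c i * K i j) *\<^sub>v v) $ i =
     (\<Sum>j<q. ((if i = j then 1 else 0) + c i * K i j) * v $ j)"
    using v i by (auto simp: scalar_prod_def lessThan_atLeast0 intro!: sum.cong)
  also have "\<dots> = (\<Sum>j<q. (if i = j then v $ j else 0) + c i * (v $ j * K i j))"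
    by (rule sum.cong[OF refl]) (simp add: algebra_simps)
  also have "\<dots> = v $ i + c i * (\<Sum>j<q. v $ j * K i j)"
    using i by (simp add: sum.distrib sum_distrib_left)
  finally show ?thesis .
qed

lemma mat_mult_delta:
  fixes K :: "nat \<Rightarrow> nat \<Rightarrow> complex"
  assumes A: "A \<in> carrier_mat p q" and a: "a < p" and j: "j < q"
  shows "(A * mat q q (\<lambda>(i,j). (if i = j then 1 else 0) + c i * K i j)) $$ (a,j) =
     A $$ (a,j) + (\<Sum>i<q. A $$ (a,i) * c i * K i j)"
proof -
  have "(A * mat q q (\<lambda>(i,j). (if i = j then 1 else 0) + c i * K i j)) $$ (a,j) =
     (\<Sum>i<q. A $$ (a,i) * ((if i = j then 1 else 0) + c i * K i j))"
    using A a j by (auto simp: scalar_prod_def lessThan_atLeast0 intro!: sum.cong)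
  also have "\<dots> = (\<Sum>i<q. (if i = j then A $$ (a,i) else 0) + A $$ (a,i) * c i * K i j)"
    by (rule sum.cong[OF refl]) (simp add: algebra_simps)
  also have "\<dots> = A $$ (a,j) + (\<Sum>i<q. A $$ (a,i) * c i * K i j)"
    using j by (simp add: sum.distrib)
  finally show ?thesis .
qed


lemma kv_supp:
  assumes qd: "quasi_definite D m" and g: "\<gamma> \<notin> lt D n"
  shows "kv D m n x \<gamma> = 0"
proof -
  have "Sfac D m (mons D k ! a) \<gamma> = 0" if "k < n" "a < length (mons D k)" for k a
    using Sfac_zero[OF qd] mons_nth[OF that(2)] g that(1) by (auto simp: lt_def lowset_def)
  then show ?thesis unfolding kv_def by simp
qed

lemma orthS:
  assumes qd: "quasi_definite D m" and a: "length \<alpha> = D" "sum_list \<alpha> = n"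
    and h: "\<forall>\<gamma>. \<gamma> \<notin> lt D n \<longrightarrow> h \<gamma> = 0"
  shows "(\<Sum>\<delta>\<in>lowset D n. h \<delta> * phi (lowset D n) m (Sfac D m \<alpha>) \<delta>) = 0"
proof (rule sum.neutral, rule ballI)
  fix \<delta> assume d: "\<delta> \<in> lowset D n"
  show "h \<delta> * phi (lowset D n) m (Sfac D m \<alpha>) \<delta> = 0"
  proof (cases "\<delta> \<in> lt D n")
    case True
    then have "phi (lowset D n) m (Sfac D m \<alpha>) \<delta> = 0"
      using Sfac_Pcond[OF qd a(1)] a unfolding Pcond_def phi_def lt_def by auto
    then show ?thesis by simp
  next
    case False then show ?thesis using h by simp
  qed
qed

lemma diff_supp:
  assumes qd: "quasi_definite D m" and qd': "quasi_definite D m'" and a: "length \<alpha> = D" "sum_list \<alpha> = n"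
  shows "\<forall>\<gamma>. \<gamma> \<notin> lt D n \<longrightarrow> Sfac D m' \<alpha> \<gamma> - Sfac D m \<alpha> \<gamma> = 0"
proof (intro allI impI)
  fix \<gamma> assume g: "\<gamma> \<notin> lt D n"
  show "Sfac D m' \<alpha> \<gamma> - Sfac D m \<alpha> \<gamma> = 0"
  proof (cases "length \<gamma> = D \<and> sum_list \<gamma> = n")
    case True then show ?thesis using Sfac_diag[OF qd a(1)] Sfac_diag[OF qd' a(1)] a by simp
  next
    case False
    then have "\<gamma> \<notin> lowset D (sum_list \<alpha>)" using g a by (auto simp: lt_def lowset_def)
    then show ?thesis using Sfac_zero[OF qd] Sfac_zero[OF qd'] by simp
  qed
qed

lemma Sfac_supp_lt:
  assumes qd: "quasi_definite D m" and "sum_list \<beta> < n"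
  shows "\<forall>\<gamma>. \<gamma> \<notin> lt D n \<longrightarrow> Sfac D m \<beta> \<gamma> = 0"
  using Sfac_zero[OF qd] assms(2) by (auto simp: lt_def lowset_def)

lemma sum_times_sum: "(\<Sum>\<delta>\<in>L. (s \<delta> :: complex) * (\<Sum>i\<in>I. c i * Y i \<delta>)) = (\<Sum>i\<in>I. c i * (\<Sum>\<delta>\<in>L. s \<delta> * Y i \<delta>))"
proof -
  have "(\<Sum>\<delta>\<in>L. s \<delta> * (\<Sum>i\<in>I. c i * Y i \<delta>)) = (\<Sum>\<delta>\<in>L. \<Sum>i\<in>I. c i * (s \<delta> * Y i \<delta>))"
    by (simp add: sum_distrib_left mult.left_commute)
  also have "\<dots> = (\<Sum>i\<in>I. \<Sum>\<delta>\<in>L. c i * (s \<delta> * Y i \<delta>))" by (rule sum.swap)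
  also have "\<dots> = (\<Sum>i\<in>I. c i * (\<Sum>\<delta>\<in>L. s \<delta> * Y i \<delta>))" by (simp add: sum_distrib_left)
  finally show ?thesis .
qed

context
  fixes D q n :: nat and m :: "nat list \<Rightarrow> complex" and \<xi> :: "nat \<Rightarrow> complex" and pts :: "nat \<Rightarrow> real list"
  assumes qd: "quasi_definite D m" and qd2: "quasi_definite D (dirac_pert m q \<xi> pts)"
    and pl: "\<forall>i<q. length (pts i) = D" and n1: "n \<ge> 1"
begin

abbreviation "mh \<equiv> dirac_pert m q \<xi> pts"
abbreviation "LL \<equiv> lowset D n"
abbreviation "xx i \<equiv> map (of_real :: real \<Rightarrow> complex) (pts i)"

lemma LL_len: "\<forall>\<gamma>\<in>LL. length \<gamma> = D" by (simp add: lowset_def)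

lemma phi_pert': "\<delta> \<in> LL \<Longrightarrow> phi LL m a \<delta> = phi LL mh a \<delta> - (\<Sum>i<q. \<xi> i * ev LL (xx i) a * monval (xx i) \<delta>)"
  using phi_pert[OF pl LL_len, of \<delta> m \<xi> a] by (simp add: lowset_def)

lemma star:
  assumes a: "length \<alpha> = D" "sum_list \<alpha> = n"
  shows "ev LL x (Sfac D mh \<alpha>) = ev LL x (Sfac D m \<alpha>) -
     (\<Sum>i<q. \<xi> i * ev LL (xx i) (Sfac D mh \<alpha>) * kernel D m n (xx i) x)"
proof -
  let ?Q = "Sfac D mh \<alpha>" let ?P = "Sfac D m \<alpha>" let ?k = "kv D m n x"
  have ks: "\<forall>\<gamma>. \<gamma> \<notin> lt D n \<longrightarrow> ?k \<gamma> = 0" using kv_supp[OF qd] by blast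
  have "ev LL x ?Q - ev LL x ?P = ev LL x (\<lambda>\<gamma>. ?Q \<gamma> - ?P \<gamma>)" by (rule ev_diff[symmetric])
  also have "\<dots> = (\<Sum>\<delta>\<in>LL. ?k \<delta> * phi LL m (\<lambda>\<gamma>. ?Q \<gamma> - ?P \<gamma>) \<delta>)"
    by (rule repro[OF qd n1 diff_supp[OF qd qd2 a], symmetric])
  also have "\<dots> = (\<Sum>\<delta>\<in>LL. ?k \<delta> * phi LL m ?Q \<delta>) - (\<Sum>\<delta>\<in>LL. ?k \<delta> * phi LL m ?P \<delta>)"
    unfolding phi_diff by (simp add: right_diff_distrib sum_subtractf)
  also have "(\<Sum>\<delta>\<in>LL. ?k \<delta> * phi LL m ?P \<delta>) = 0" by (rule orthS[OF qd a ks])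
  also have "(\<Sum>\<delta>\<in>LL. ?k \<delta> * phi LL m ?Q \<delta>) =
      (\<Sum>\<delta>\<in>LL. ?k \<delta> * phi LL mh ?Q \<delta>) - (\<Sum>\<delta>\<in>LL. ?k \<delta> * (\<Sum>i<q. (\<xi> i * ev LL (xx i) ?Q) * monval (xx i) \<delta>))"
    by (simp add: phi_pert' right_diff_distrib sum_subtractf)
  also have "(\<Sum>\<delta>\<in>LL. ?k \<delta> * phi LL mh ?Q \<delta>) = 0" by (rule orthS[OF qd2 a ks])
  also have "(\<Sum>\<delta>\<in>LL. ?k \<delta> * (\<Sum>i<q. (\<xi> i * ev LL (xx i) ?Q) * monval (xx i) \<delta>)) =
     (\<Sum>i<q. (\<xi> i * ev LL (xx i) ?Q) * (\<Sum>\<delta>\<in>LL. ?k \<delta> * monval (xx i) \<delta>))"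
    by (rule sum_times_sum)
  also have "\<dots> = (\<Sum>i<q. \<xi> i * ev LL (xx i) ?Q * kernel D m n (xx i) x)"
    by (simp add: kernel_ev[OF qd] ev_def)
  finally show ?thesis by (simp add: algebra_simps)
qed

lemma phi_pert2: "\<delta> \<in> LL \<Longrightarrow> phi LL mh a \<delta> = phi LL m a \<delta> + (\<Sum>i<q. (\<xi> i * ev LL (xx i) a) * monval (xx i) \<delta>)"
  using phi_pert[OF pl LL_len, of \<delta> m \<xi> a] by (simp add: lowset_def)

lemma pair_pert: "(\<Sum>\<delta>\<in>LL. s \<delta> * phi LL mh a \<delta>) =
   (\<Sum>\<delta>\<in>LL. s \<delta> * phi LL m a \<delta>) + (\<Sum>i<q. (\<xi> i * ev LL (xx i) a) * ev LL (xx i) s)"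
proof -
  have "(\<Sum>\<delta>\<in>LL. s \<delta> * phi LL mh a \<delta>) =
     (\<Sum>\<delta>\<in>LL. s \<delta> * phi LL m a \<delta> + s \<delta> * (\<Sum>i<q. (\<xi> i * ev LL (xx i) a) * monval (xx i) \<delta>))"
  proof (rule sum.cong[OF refl])
    fix \<delta> assume "\<delta> \<in> LL"
    then show "s \<delta> * phi LL mh a \<delta> = s \<delta> * phi LL m a \<delta> + s \<delta> * (\<Sum>i<q. (\<xi> i * ev LL (xx i) a) * monval (xx i) \<delta>)"
      by (simp only: phi_pert2 distrib_left)
  qed
  also have "\<dots> = (\<Sum>\<delta>\<in>LL. s \<delta> * phi LL m a \<delta>) + (\<Sum>\<delta>\<in>LL. s \<delta> * (\<Sum>i<q. (\<xi> i * ev LL (xx i) a) * monval (xx i) \<delta>))"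
    by (rule sum.distrib)
  also have "(\<Sum>\<delta>\<in>LL. s \<delta> * (\<Sum>i<q. (\<xi> i * ev LL (xx i) a) * monval (xx i) \<delta>)) =
      (\<Sum>i<q. (\<xi> i * ev LL (xx i) a) * (\<Sum>\<delta>\<in>LL. s \<delta> * monval (xx i) \<delta>))"
    by (rule sum_times_sum)
  also have "\<dots> = (\<Sum>i<q. (\<xi> i * ev LL (xx i) a) * ev LL (xx i) s)"
    unfolding ev_def by (rule refl)
  finally show ?thesis .
qed

abbreviation "MM \<equiv> mat q q (\<lambda>(i,j). (if i = j then 1 else 0) + \<xi> i * kernel D m n (xx i) (xx j))"

lemma MM_carrier: "MM \<in> carrier_mat q q" by auto

lemma MM_entry: "i < q \<Longrightarrow> j < q \<Longrightarrow> MM $$ (i,j) = (if i = j then 1 else 0) + \<xi> i * kernel D m n (xx i) (xx j)"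
  by simp

lemma MM_det: "det MM \<noteq> 0"
proof (rule det_nz_kernel[OF MM_carrier])
  fix v :: "complex vec" assume v: "v \<in> carrier_vec q" and Mv: "MM *\<^sub>v v = 0\<^sub>v q"
  define g where "g = (\<lambda>\<gamma>. \<Sum>j<q. v $ j * kv D m n (xx j) \<gamma>)"
  have evg: "ev LL (xx i) g = (\<Sum>j<q. v $ j * kernel D m n (xx i) (xx j))" for i
    unfolding g_def ev_sum ev_scale kernel_ev[OF qd] by (rule refl)
  have vi: "v $ i + \<xi> i * ev LL (xx i) g = 0" if i: "i < q" for i
  proof -
    have "(MM *\<^sub>v v) $ i = 0" using Mv i by simp
    moreover have "(MM *\<^sub>v v) $ i = v $ i + \<xi> i * (\<Sum>j<q. v $ j * kernel D m n (xx i) (xx j))"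
      by (rule mat_vec_delta[OF v i])
    ultimately show ?thesis unfolding evg by simp
  qed
  have gs: "\<forall>\<gamma>. \<gamma> \<notin> lt D n \<longrightarrow> g \<gamma> = 0" unfolding g_def using kv_supp[OF qd] by simp
  have g0: "g = (\<lambda>_. 0)"
  proof (rule Zlem[OF qd2 n1, of n])
    show "\<forall>\<beta>. length \<beta> = D \<and> sum_list \<beta> < n \<longrightarrow>
      (\<Sum>\<delta>\<in>LL. Sfac D mh \<beta> \<delta> * phi LL mh g \<delta>) = 0"
    proof (intro allI impI)
      fix \<beta> assume b: "length \<beta> = D \<and> sum_list \<beta> < n"
      let ?f = "Sfac D mh \<beta>"
      have fs: "\<forall>\<gamma>. \<gamma> \<notin> lt D n \<longrightarrow> ?f \<gamma> = 0" using Sfac_supp_lt[OF qd2] b by blast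
      have "(\<Sum>\<delta>\<in>LL. ?f \<delta> * phi LL mh g \<delta>) =
          (\<Sum>\<delta>\<in>LL. ?f \<delta> * phi LL m g \<delta>) + (\<Sum>i<q. (\<xi> i * ev LL (xx i) g) * ev LL (xx i) ?f)"
        by (rule pair_pert)
      also have "(\<Sum>\<delta>\<in>LL. ?f \<delta> * phi LL m g \<delta>) = (\<Sum>j<q. v $ j * ev LL (xx j) ?f)"
      proof -
        have "(\<Sum>\<delta>\<in>LL. ?f \<delta> * phi LL m g \<delta>) = (\<Sum>\<delta>\<in>LL. g \<delta> * phi LL m ?f \<delta>)" by (rule pair_sym)
        also have "\<dots> = (\<Sum>j<q. v $ j * (\<Sum>\<delta>\<in>LL. kv D m n (xx j) \<delta> * phi LL m ?f \<delta>))"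
          unfolding g_def lin_sum lin_scale by (rule refl)
        also have "\<dots> = (\<Sum>j<q. v $ j * ev LL (xx j) ?f)" by (simp add: repro[OF qd n1 fs])
        finally show ?thesis .
      qed
      also have "(\<Sum>j<q. v $ j * ev LL (xx j) ?f) + (\<Sum>i<q. (\<xi> i * ev LL (xx i) g) * ev LL (xx i) ?f) =
          (\<Sum>i<q. (v $ i + \<xi> i * ev LL (xx i) g) * ev LL (xx i) ?f)"
        by (simp add: distrib_right sum.distrib)
      also have "\<dots> = 0" using vi by simp
      finally show "(\<Sum>\<delta>\<in>LL. ?f \<delta> * phi LL mh g \<delta>) = 0" .
    qed
  qed (use gs in simp_all)
  have "ev LL (xx i) g = 0" for i by (simp add: g0 ev_def)
  then have "v $ i = 0" if "i < q" for i using vi[OF that] by simp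
  then show "v = 0\<^sub>v q" using v by auto
qed

abbreviation "CC \<equiv> mat (length (mons D n)) q (\<lambda>(a,i). Pvec D m n (xx i) $$ (a,0))"
abbreviation "CH \<equiv> mat (length (mons D n)) q (\<lambda>(a,i). ev LL (xx i) (Sfac D mh (mons D n ! a)))"

lemma CH_MM: "CH * MM = CC"
proof (rule eq_matI)
  fix a j assume a: "a < dim_row CC" and j: "j < dim_col CC"
  let ?Q = "Sfac D mh (mons D n ! a)"
  have an: "length (mons D n ! a) = D" "sum_list (mons D n ! a) = n" using mons_nth a by auto
  have CHc: "CH \<in> carrier_mat (length (mons D n)) q" by auto
  have "(CH * MM) $$ (a,j) = CH $$ (a,j) + (\<Sum>i<q. CH $$ (a,i) * \<xi> i * kernel D m n (xx i) (xx j))"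
    by (rule mat_mult_delta[OF CHc]) (use a j in auto)
  also have "\<dots> = ev LL (xx j) ?Q + (\<Sum>i<q. \<xi> i * ev LL (xx i) ?Q * kernel D m n (xx i) (xx j))"
  proof -
    have a': "a < length (mons D n)" and j': "j < q" using a j by auto
    have "CH $$ (a,j) = ev LL (xx j) ?Q" using a' j' by simp
    moreover have "(\<Sum>i<q. CH $$ (a,i) * \<xi> i * kernel D m n (xx i) (xx j)) =
        (\<Sum>i<q. \<xi> i * ev LL (xx i) ?Q * kernel D m n (xx i) (xx j))"
    proof (rule sum.cong[OF refl])
      fix i assume "i \<in> {..<q}"
      then have "CH $$ (a,i) = ev LL (xx i) ?Q" using a' by simp
      then show "CH $$ (a,i) * \<xi> i * kernel D m n (xx i) (xx j) = \<xi> i * ev LL (xx i) ?Q * kernel D m n (xx i) (xx j)"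
        by (simp only: mult.commute)
    qed
    ultimately show ?thesis by simp
  qed
  also have "\<dots> = ev LL (xx j) (Sfac D m (mons D n ! a))" by (subst star[OF an, of "xx j"]) simp
  also have "\<dots> = CC $$ (a,j)" using a j Pvec_conv[OF qd, of n n a "xx j"] by simp
  finally show "(CH * MM) $$ (a,j) = CC $$ (a,j)" .
qed auto

lemma CC_minv: "CC * minv MM = CH"
proof -
  have Mi: "minv MM \<in> carrier_mat q q" "MM * minv MM = 1\<^sub>m q"
    using minv_props[OF MM_carrier MM_det] by auto
  have CHc: "CH \<in> carrier_mat (length (mons D n)) q" by auto
  have "CC * minv MM = (CH * MM) * minv MM" by (simp only: CH_MM)
  also have "\<dots> = CH * (MM * minv MM)" by (rule assoc_mult_mat[OF CHc MM_carrier Mi(1)])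
  also have "\<dots> = CH" using Mi CHc by simp
  finally show ?thesis .
qed

lemma H_ident:
  assumes a: "a < length (mons D n)" and b: "b < length (mons D n)"
  shows "Hblk D mh n $$ (a,b) = Hblk D m n $$ (a,b) +
     (\<Sum>i<q. ev LL (xx i) (Sfac D mh (mons D n ! a)) * (\<xi> i * ev LL (xx i) (Sfac D m (mons D n ! b))))"
proof -
  let ?Qa = "Sfac D mh (mons D n ! a)" let ?Qb = "Sfac D mh (mons D n ! b)"
  let ?Pa = "Sfac D m (mons D n ! a)" let ?Pb = "Sfac D m (mons D n ! b)"
  have an: "length (mons D n ! a) = D" "sum_list (mons D n ! a) = n" using mons_nth a by auto
  have bn: "length (mons D n ! b) = D" "sum_list (mons D n ! b) = n" using mons_nth b by auto
  have "Hblk D mh n $$ (a,b) = sgs D mh (Sfac D mh) (mons D n ! a) (mons D n ! b)"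
    by (rule Hblk_idx[OF a b])
  also have "\<dots> = (\<Sum>\<delta>\<in>LL. ?Qb \<delta> * phi LL mh ?Qa \<delta>)"
    by (rule sgs_conv[OF qd2]) (use an bn in auto)
  also have "\<dots> = (\<Sum>\<delta>\<in>LL. ?Pb \<delta> * phi LL mh ?Qa \<delta>)"
  proof -
    have "(\<Sum>\<delta>\<in>LL. (?Qb \<delta> - ?Pb \<delta>) * phi LL mh ?Qa \<delta>) = 0" by (rule orthS[OF qd2 an diff_supp[OF qd qd2 bn]])
    then show ?thesis unfolding lin_diff by simp
  qed
  also have "\<dots> = (\<Sum>\<delta>\<in>LL. ?Pb \<delta> * phi LL m ?Qa \<delta>) + (\<Sum>i<q. (\<xi> i * ev LL (xx i) ?Qa) * ev LL (xx i) ?Pb)"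
    by (rule pair_pert)
  also have "(\<Sum>\<delta>\<in>LL. ?Pb \<delta> * phi LL m ?Qa \<delta>) = Hblk D m n $$ (a,b)"
  proof -
    have "(\<Sum>\<delta>\<in>LL. ?Pb \<delta> * phi LL m ?Qa \<delta>) = (\<Sum>\<delta>\<in>LL. ?Qa \<delta> * phi LL m ?Pb \<delta>)" by (rule pair_sym)
    also have "\<dots> = (\<Sum>\<delta>\<in>LL. ?Pa \<delta> * phi LL m ?Pb \<delta>)"
    proof -
      have "(\<Sum>\<delta>\<in>LL. (?Qa \<delta> - ?Pa \<delta>) * phi LL m ?Pb \<delta>) = 0" by (rule orthS[OF qd bn diff_supp[OF qd qd2 an]])
      then show ?thesis unfolding lin_diff by simp
    qed
    also have "\<dots> = (\<Sum>\<delta>\<in>LL. ?Pb \<delta> * phi LL m ?Pa \<delta>)" by (rule pair_sym)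
    also have "\<dots> = sgs D m (Sfac D m) (mons D n ! a) (mons D n ! b)"
      by (rule sgs_conv[OF qd, symmetric]) (use an bn in auto)
    also have "\<dots> = Hblk D m n $$ (a,b)" by (rule Hblk_idx[OF a b, symmetric])
    finally show ?thesis .
  qed
  finally show ?thesis by (simp add: mult_ac)
qed

lemma main_ctx:
  fixes x :: "complex list"
  shows "Pvec D mh n x = qdet MM (mat q 1 (\<lambda>(i,_). \<xi> i * kernel D m n (xx i) x)) CC (Pvec D m n x)
     \<and> Hblk D mh n = qdet MM (mat q (length (mons D n)) (\<lambda>(i,a). - \<xi> i * Pvec D m n (xx i) $$ (a,0))) CC (Hblk D m n)"
proof
  let ?r = "length (mons D n)"
  have CHc: "CH \<in> carrier_mat ?r q" by auto
  let ?Bv = "mat q 1 (\<lambda>(i,_). \<xi> i * kernel D m n (xx i) x)"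
  let ?Bn = "mat q ?r (\<lambda>(i,a). - \<xi> i * Pvec D m n (xx i) $$ (a,0))"
  have Bvc: "?Bv \<in> carrier_mat q 1" by auto
  have Bnc: "?Bn \<in> carrier_mat q ?r" by auto
  show "Pvec D mh n x = qdet MM ?Bv CC (Pvec D m n x)"
    unfolding qdet_def CC_minv
  proof (rule eq_matI)
    fix a j assume a: "a < dim_row (Pvec D m n x - CH * ?Bv)" and j: "j < dim_col (Pvec D m n x - CH * ?Bv)"
    have a': "a < ?r" and j0: "j = 0" using a j Pvec_carrier[of D m n x] by auto
    have an: "length (mons D n ! a) = D" "sum_list (mons D n ! a) = n" using mons_nth a' by auto
    have "(CH * ?Bv) $$ (a,0) = (\<Sum>i<q. CH $$ (a,i) * ?Bv $$ (i,0))"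
      by (rule mult_mat_entry[OF CHc Bvc a']) simp
    also have "\<dots> = (\<Sum>i<q. \<xi> i * ev LL (xx i) (Sfac D mh (mons D n ! a)) * kernel D m n (xx i) x)"
      by (rule sum.cong[OF refl]) (use a' in \<open>simp add: mult_ac\<close>)
    finally have e: "(CH * ?Bv) $$ (a,0) = \<dots>" .
    have "(Pvec D m n x - CH * ?Bv) $$ (a,0) = Pvec D m n x $$ (a,0) - (CH * ?Bv) $$ (a,0)"
      using a' CHc Bvc by simp
    also have "\<dots> = ev LL x (Sfac D m (mons D n ! a)) - (\<Sum>i<q. \<xi> i * ev LL (xx i) (Sfac D mh (mons D n ! a)) * kernel D m n (xx i) x)"
      unfolding e using Pvec_conv[OF qd order.refl a'] by simp
    also have "\<dots> = ev LL x (Sfac D mh (mons D n ! a))" by (rule star[OF an, symmetric])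
    also have "\<dots> = Pvec D mh n x $$ (a,0)" using Pvec_conv[OF qd2 order.refl a'] by simp
    finally show "Pvec D mh n x $$ (a,j) = (Pvec D m n x - CH * ?Bv) $$ (a,j)" using j0 by simp
  next
    show "dim_row (Pvec D mh n x) = dim_row (Pvec D m n x - CH * ?Bv)"
      using Pvec_carrier[of D mh n x] Pvec_carrier[of D m n x] by simp
    show "dim_col (Pvec D mh n x) = dim_col (Pvec D m n x - CH * ?Bv)"
      using Pvec_carrier[of D mh n x] Pvec_carrier[of D m n x] Bvc by simp
  qed
  show "Hblk D mh n = qdet MM ?Bn CC (Hblk D m n)"
    unfolding qdet_def CC_minv
  proof (rule eq_matI)
    fix a b assume a: "a < dim_row (Hblk D m n - CH * ?Bn)" and b: "b < dim_col (Hblk D m n - CH * ?Bn)"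
    have a': "a < ?r" and b': "b < ?r" using a b Hblk_carrier[of D m n] by auto
    have "(CH * ?Bn) $$ (a,b) = (\<Sum>i<q. CH $$ (a,i) * ?Bn $$ (i,b))"
      by (rule mult_mat_entry[OF CHc Bnc a' b'])
    also have "\<dots> = - (\<Sum>i<q. ev LL (xx i) (Sfac D mh (mons D n ! a)) * (\<xi> i * ev LL (xx i) (Sfac D m (mons D n ! b))))"
      unfolding sum_negf[symmetric]
      by (rule sum.cong[OF refl]) (use a' b' Pvec_conv[OF qd order.refl b'] in simp)
    finally have e: "(CH * ?Bn) $$ (a,b) = \<dots>" .
    have "(Hblk D m n - CH * ?Bn) $$ (a,b) = Hblk D m n $$ (a,b) - (CH * ?Bn) $$ (a,b)"
      using a' b' CHc Bnc by simp
    also have "\<dots> = Hblk D mh n $$ (a,b)" unfolding e H_ident[OF a' b'] by simp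
    finally show "Hblk D mh n $$ (a,b) = (Hblk D m n - CH * ?Bn) $$ (a,b)" by simp
  next
    show "dim_row (Hblk D mh n) = dim_row (Hblk D m n - CH * ?Bn)"
      using Hblk_carrier[of D mh n] Hblk_carrier[of D m n] by simp
    show "dim_col (Hblk D mh n) = dim_col (Hblk D m n - CH * ?Bn)"
      using Hblk_carrier[of D mh n] Hblk_carrier[of D m n] Bnc by simp
  qed
qed

end


theorem mainTheorem16:
  fixes D q n :: nat and m :: "nat list \<Rightarrow> complex" and \<xi> :: "nat \<Rightarrow> complex"
    and pts :: "nat \<Rightarrow> real list" and x :: "complex list"
  assumes "D \<ge> 1"
    and "quasi_definite D m"
    and "\<forall>i<q. length (pts i) = D"
    and "inj_on pts {..<q}"
    and "quasi_definite D (dirac_pert m q \<xi> pts)"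
    and "n \<ge> 1"
    and "length x = D"
  shows "Pvec D (dirac_pert m q \<xi> pts) n x =
           qdet (mat q q (\<lambda>(i,j). (if i = j then 1 else 0)
                     + \<xi> i * kernel D m n (map of_real (pts i)) (map of_real (pts j))))
                (mat q 1 (\<lambda>(i,_). \<xi> i * kernel D m n (map of_real (pts i)) x))
                (mat (length (mons D n)) q (\<lambda>(a,i). Pvec D m n (map of_real (pts i)) $$ (a,0)))
                (Pvec D m n x)
       \<and> Hblk D (dirac_pert m q \<xi> pts) n =
           qdet (mat q q (\<lambda>(i,j). (if i = j then 1 else 0)
                     + \<xi> i * kernel D m n (map of_real (pts i)) (map of_real (pts j))))
                (mat q (length (mons D n)) (\<lambda>(i,a). - \<xi> i * Pvec D m n (map of_real (pts i)) $$ (a,0)))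
                (mat (length (mons D n)) q (\<lambda>(a,i). Pvec D m n (map of_real (pts i)) $$ (a,0)))
                (Hblk D m n)"
  using main_ctx[OF assms(2) assms(5) assms(3) assms(6), of x] by simp

end
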